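(* Under the standing setup with assumptions (A1)–(A4), suppose the claims $X_n^k$ are bounded (no boundedness assumed for $D_n^k,R_n^k$) and $r\le m\mu$, and let $\theta$ be a solution of $\int_\theta^bx\,\mathrm dF(x)=r/m$. Suppose that there is $t_0$ such that for all $t\ge t_0$ and all $v\ge0$, $$\mathrm P\big[M(D_0(t),(X_0^k)_{k=1}^{D_0(t)},R_0(t))\ge v\big]\le\mathrm P\big[M(D_0(t+1),(X_0^k)_{k=1}^{D_0(t+1)},R_0(t+1))\ge v\big].$$ Then $m(1-F(\theta))>1$ implies $q_S<1$.
   Context: Standing setup. On a probability space $(\Omega,\mathcal F,\mathrm P)$ there are three mutually independent double arrays $(D_n^k)_{n\ge0,k\ge1}$, $(X_n^k)_{n\ge0,k\ge1}$, $(R_n^k)_{n\ge0,k\ge1}$, each consisting of i.i.d. random variables: $D_n^k\in\{0,1,2,\dots\}$ with law $p_j=\mathrm P[D_n^k=j]$ and mean $m$; $X_n^k\ge0$ real-valued with continuous distribution function $F$ and mean $\mu$; $R_n^k\ge0$ real-valued with mean $r$. Standing assumptions: (A1) $1<m<\infty$, $r<\infty$, $0<\mu<\infty$; (A2) $p_0>0$ and $p_k>0$ for some $k\ge2$; (A3) for the process under consideration started at $1$, every finite positive state is reached with positive probability; (A4) $D_n^k,X_n^k,R_n^k$ have finite variances. $b$ denotes the supremum of the support of $F$. Write $D_n(k)=\sum_{j=1}^kD_n^j$, $R_n(k)=\sum_{j=1}^kR_n^j$. For $(x_k)_{k=1}^t$ let $x_{1,t}\le\dots\le x_{t,t}$ be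 its order statistics. The strongest-first counting function is $M(0,\varnothing,s)=0$ and, for $t\ge1$, $M(t,(x_k)_{k=1}^t,s)=0$ if $x_{t,t}>s$, otherwise $\max\{1\le k\le t:\sum_{j=t-k+1}^tx_{j,t}\le s\}$. The sf-process is $S_0=1$, $S_{n+1}=M\big(D_n(S_n),(X_n^k)_{k=1}^{D_n(S_n)},R_n(S_n)\big)$, and $q_S=\mathrm P[\lim_nS_n=0\mid S_0=1]$. *)

theory Defs
  imports "HOL-Probability.Probability"
begin

text \<open>The finite sequence (x_k)_{k=1}^t is given by a function x on indices 1..t.
  sfsorted t x is the list x_{1,t} <= ... <= x_{t,t} of order statistics;
  the sum of the k largest order statistics is the sum of its last k entries.\<close>

definition sfsorted :: "nat \<Rightarrow> (nat \<Rightarrow> real) \<Rightarrow> real list" where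
  "sfsorted t x = sort (map x [1..<t+1])"

definition sfM :: "nat \<Rightarrow> (nat \<Rightarrow> real) \<Rightarrow> real \<Rightarrow> nat" where
  "sfM t x s =
     (if t = 0 then 0
      else if last (sfsorted t x) > s then 0
      else Max {k \<in> {1..t}. sum_list (drop (t - k) (sfsorted t x)) \<le> s})"

definition Dsum :: "(nat \<Rightarrow> nat \<Rightarrow> 'a \<Rightarrow> nat) \<Rightarrow> nat \<Rightarrow> nat \<Rightarrow> 'a \<Rightarrow> nat" where
  "Dsum D n k \<omega> = (\<Sum>j=1..k. D n j \<omega>)"

definition Rsum :: "(nat \<Rightarrow> nat \<Rightarrow> 'a \<Rightarrow> real) \<Rightarrow> nat \<Rightarrow> nat \<Rightarrow> 'a \<Rightarrow> real" where
  "Rsum R n k \<omega> = (\<Sum>j=1..k. R n j \<omega>)"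

primrec sfS :: "(nat \<Rightarrow> nat \<Rightarrow> 'a \<Rightarrow> nat) \<Rightarrow> (nat \<Rightarrow> nat \<Rightarrow> 'a \<Rightarrow> real) \<Rightarrow>
    (nat \<Rightarrow> nat \<Rightarrow> 'a \<Rightarrow> real) \<Rightarrow> nat \<Rightarrow> 'a \<Rightarrow> nat" where
  "sfS D X R 0 \<omega> = 1"
| "sfS D X R (Suc n) \<omega> =
     sfM (Dsum D n (sfS D X R n \<omega>) \<omega>) (\<lambda>k. X n k \<omega>) (Rsum R n (sfS D X R n \<omega>) \<omega>)"

text \<open>All variables of the three arrays together, as one real-valued family indexed by
  (array tag, n, k) with tag 0 = D, 1 = X, 2 = R.\<close>
definition allvars :: "(nat \<Rightarrow> nat \<Rightarrow> 'a \<Rightarrow> nat) \<Rightarrow> (nat \<Rightarrow> nat \<Rightarrow> 'a \<Rightarrow> real) \<Rightarrow>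
    (nat \<Rightarrow> nat \<Rightarrow> 'a \<Rightarrow> real) \<Rightarrow> nat \<times> nat \<times> nat \<Rightarrow> 'a \<Rightarrow> real" where
  "allvars D X R i \<omega> = (case i of (c, n, k) \<Rightarrow>
      (if c = 0 then real (D n k \<omega>) else if c = 1 then X n k \<omega> else R n k \<omega>))"

definition allidx :: "(nat \<times> nat \<times> nat) set" where
  "allidx = {0, 1, 2} \<times> UNIV \<times> {1..}"

definition cdf_support :: "(real \<Rightarrow> real) \<Rightarrow> real set" where
  "cdf_support F = {x. \<forall>e>0. F (x + e) - F (x - e) > 0}"

end

theory Submission
  imports Defs
begin

definition topsum :: "nat \<Rightarrow> real list \<Rightarrow> real" where
  "topsum k xs = sum_list (drop (length xs - k) (sort xs))"

lemma sum_list_map_sort: "sum_list (map (f::real\<Rightarrow>real) (sort xs)) = sum_list (map f (xs::real list))"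
proof -
  have "sum_list (map f ys) = sum_mset (image_mset f (mset ys))" for ys :: "real list" and f :: "real \<Rightarrow> real"
    by (induction ys) auto
  then show ?thesis by simp
qed

lemma sum_list_minus_const: "sum_list (map (\<lambda>y. y - c) zs) = sum_list zs - real (length zs) * (c::real)"
  by (induction zs) (auto simp: algebra_simps)

lemma sum_list_maxpart0: "\<forall>y\<in>set zs. y \<le> c \<Longrightarrow> sum_list (map (\<lambda>y. max 0 (y - c)) zs) = (0::real)"
  by (induction zs) auto

lemma topsum_le:
  assumes "k \<le> length xs"
  shows "topsum k xs \<le> real k * c + sum_list (map (\<lambda>x. max 0 (x - c)) xs)"
proof -
  define ys where "ys = sort xs"
  define n where "n = length xs - k"
  have len: "length ys = length xs" by (simp add: ys_def)
  have ysplit: "ys = take n ys @ drop n ys" by simp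
  have ldrop: "length (drop n ys) = k" using assms len by (simp add: n_def)
  have "sum_list (drop n ys) = sum_list (map (\<lambda>y. y - c) (drop n ys)) + real k * c"
  proof -
    have "sum_list (map (\<lambda>y. y - c) (drop n ys)) = sum_list (drop n ys) - real (length (drop n ys)) * c"
      by (rule sum_list_minus_const)
    then show ?thesis using ldrop by simp
  qed
  also have "sum_list (map (\<lambda>y. y - c) (drop n ys)) \<le> sum_list (map (\<lambda>y. max 0 (y - c)) (drop n ys))"
    by (rule sum_list_mono) auto
  also have "\<dots> \<le> sum_list (map (\<lambda>y. max 0 (y - c)) (take n ys)) + sum_list (map (\<lambda>y. max 0 (y - c)) (drop n ys))"
    using sum_list_nonneg[of "map (\<lambda>y. max 0 (y - c)) (take n ys)"] by force
  also have "\<dots> = sum_list (map (\<lambda>y. max 0 (y - c)) ys)"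
    by (metis map_append sum_list_append ysplit)
  also have "\<dots> = sum_list (map (\<lambda>y. max 0 (y - c)) xs)"
    unfolding ys_def by (rule sum_list_map_sort)
  finally show ?thesis unfolding topsum_def ys_def n_def by simp
qed

lemma topsum_attained:
  assumes "1 \<le> k" "k \<le> length xs"
  shows "\<exists>c\<in>set xs. topsum k xs = real k * c + sum_list (map (\<lambda>x. max 0 (x - c)) xs)"
proof -
  define ys where "ys = sort xs"
  define n where "n = length xs - k"
  have len: "length ys = length xs" by (simp add: ys_def)
  have nlt: "n < length ys" using assms len by (simp add: n_def)
  define c where "c = ys ! n"
  have cin: "c \<in> set xs" using nlt unfolding c_def ys_def by (metis nth_mem set_sort)
  have sorted: "sorted ys" by (simp add: ys_def)
  have ysplit: "ys = take n ys @ drop n ys" by simp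
  have ldrop: "length (drop n ys) = k" using assms len by (simp add: n_def)
  have low: "\<forall>y\<in>set (take n ys). y \<le> c"
  proof
    fix y assume "y \<in> set (take n ys)"
    then obtain i where i: "i < n" "y = ys ! i" using nlt
      by (auto simp: in_set_conv_nth)
    then show "y \<le> c" unfolding c_def using sorted nlt by (simp add: sorted_iff_nth_mono)
  qed
  have high: "\<forall>y\<in>set (drop n ys). c \<le> y"
  proof
    fix y assume "y \<in> set (drop n ys)"
    then obtain i where i: "i < length ys - n" "y = ys ! (n + i)" using nlt
      by (auto simp: in_set_conv_nth)
    then show "c \<le> y" unfolding c_def using sorted nlt by (simp add: sorted_iff_nth_mono)
  qed
  have t0: "sum_list (map (\<lambda>y. max 0 (y - c)) (take n ys)) = 0"
    using low by (rule sum_list_maxpart0)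
  have t1: "sum_list (map (\<lambda>y. max 0 (y - c)) (drop n ys)) = sum_list (map (\<lambda>y. y - c) (drop n ys))"
    using high by (intro arg_cong[where f=sum_list] map_cong) auto
  have t2: "sum_list (map (\<lambda>y. y - c) (drop n ys)) = sum_list (drop n ys) - real k * c"
  proof -
    have "sum_list (map (\<lambda>y. y - c) (drop n ys)) = sum_list (drop n ys) - real (length (drop n ys)) * c"
      by (rule sum_list_minus_const)
    then show ?thesis using ldrop by simp
  qed
  have "sum_list (map (\<lambda>y. max 0 (y - c)) xs) = sum_list (map (\<lambda>y. max 0 (y - c)) ys)"
    unfolding ys_def by (rule sum_list_map_sort[symmetric])
  also have "\<dots> = sum_list (map (\<lambda>y. max 0 (y - c)) (take n ys)) + sum_list (map (\<lambda>y. max 0 (y - c)) (drop n ys))"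
    by (metis map_append sum_list_append ysplit)
  finally have "sum_list (map (\<lambda>y. max 0 (y - c)) xs) = sum_list (drop n ys) - real k * c"
    using t0 t1 t2 by simp
  then show ?thesis using cin unfolding topsum_def ys_def n_def by (intro bexI[of _ c]) auto
qed

lemma topsum_le_iff:
  assumes "1 \<le> k" "k \<le> length xs"
  shows "topsum k xs \<le> s \<longleftrightarrow> (\<exists>c\<in>set xs. real k * c + sum_list (map (\<lambda>x. max 0 (x - c)) xs) \<le> s)"
proof
  assume "topsum k xs \<le> s"
  with topsum_attained[OF assms] show "\<exists>c\<in>set xs. real k * c + sum_list (map (\<lambda>x. max 0 (x - c)) xs) \<le> s"
    by force
next
  assume "\<exists>c\<in>set xs. real k * c + sum_list (map (\<lambda>x. max 0 (x - c)) xs) \<le> s"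
  then obtain c where "real k * c + sum_list (map (\<lambda>x. max 0 (x - c)) xs) \<le> s" by blast
  with topsum_le[OF assms(2), of c] show "topsum k xs \<le> s" by linarith
qed

lemma drop_len_minus1: "ys \<noteq> [] \<Longrightarrow> drop (length ys - 1) ys = [last ys]"
  by (induction ys rule: rev_induct) auto

definition sfpred :: "nat \<Rightarrow> (nat \<Rightarrow> real) \<Rightarrow> real \<Rightarrow> nat \<Rightarrow> bool" where
  "sfpred t x s k = (\<exists>i\<in>{1..t}. real k * x i + (\<Sum>l\<in>{1..t}. max 0 (x l - x i)) \<le> s)"

lemma sum_list_upt_map: "sum_list (map f [1..<t+1]) = (\<Sum>l\<in>{1..t}. (f l::real))"
proof -
  have "sum_list (map f [1..<t+1]) = sum f (set [1..<t+1])"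
    by (simp add: sum_list_distinct_conv_sum_set)
  also have "set [1..<t+1] = {1..t}" by auto
  finally show ?thesis .
qed

lemma topsum_sfpred:
  assumes "1 \<le> k" "k \<le> t"
  shows "topsum k (map x [1..<t+1]) \<le> s \<longleftrightarrow> sfpred t x s k"
proof -
  have "topsum k (map x [1..<t+1]) \<le> s \<longleftrightarrow>
     (\<exists>c\<in>set (map x [1..<t+1]). real k * c + sum_list (map (\<lambda>y. max 0 (y - c)) (map x [1..<t+1])) \<le> s)"
    using assms by (intro topsum_le_iff) auto
  also have "\<dots> \<longleftrightarrow> sfpred t x s k"
  proof -
    have eqs: "\<And>c. sum_list (map (\<lambda>y. max 0 (y - c)) (map x [1..<t+1])) = (\<Sum>l\<in>{1..t}. max 0 (x l - c))"
      by (simp only: map_map o_def sum_list_upt_map)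
    have setq: "set (map x [1..<t+1]) = x ` {1..t}"
      by (simp only: set_map set_upt) auto
    show ?thesis unfolding sfpred_def eqs setq by auto
  qed
  finally show ?thesis .
qed

lemma sfM_ge:
  assumes j: "1 \<le> j"
  shows "j \<le> sfM t x s \<longleftrightarrow> (1 \<le> t \<and> sfpred t x s 1 \<and> (\<exists>k\<in>{j..t}. sfpred t x s k))"
proof (cases "t = 0")
  case True then show ?thesis using j by (simp add: sfM_def)
next
  case False
  define L where "L = map x [1..<t+1]"
  have len: "length (sfsorted t x) = t" by (simp add: sfsorted_def)
  have tsum: "sum_list (drop (t - k) (sfsorted t x)) = topsum k L" for k
    by (simp add: topsum_def L_def sfsorted_def)
  have lastq: "last (sfsorted t x) = topsum 1 L"
  proof -
    have ne: "sfsorted t x \<noteq> []" using len False by auto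
    have "topsum 1 L = sum_list (drop (t - 1) (sfsorted t x))" using tsum by simp
    also have "\<dots> = last (sfsorted t x)" using drop_len_minus1[OF ne] len by simp
    finally show ?thesis by simp
  qed
  have P: "topsum k L \<le> s \<longleftrightarrow> sfpred t x s k" if "1 \<le> k" "k \<le> t" for k
    unfolding L_def using that by (rule topsum_sfpred)
  show ?thesis
  proof (cases "last (sfsorted t x) > s")
    case True
    then have "\<not> sfpred t x s 1" using P[of 1] False lastq by auto
    then show ?thesis using True False j by (simp add: sfM_def)
  next
    case nl: False
    define S where "S = {k \<in> {1..t}. sum_list (drop (t - k) (sfsorted t x)) \<le> s}"
    have eq: "sfM t x s = Max S" using False nl by (simp add: sfM_def S_def)
    have fin: "finite S" by (simp add: S_def)
    have one: "1 \<in> S" using False nl lastq tsum by (auto simp: S_def)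
    have p1: "sfpred t x s 1" using P[of 1] False nl lastq by auto
    have "j \<le> Max S \<longleftrightarrow> (\<exists>k\<in>S. j \<le> k)" using fin one by (subst Max_ge_iff) auto
    also have "\<dots> \<longleftrightarrow> (\<exists>k\<in>{j..t}. sfpred t x s k)"
    proof
      assume "\<exists>k\<in>S. j \<le> k"
      then obtain k where k: "k \<in> {1..t}" "topsum k L \<le> s" "j \<le> k" unfolding S_def tsum by auto
      then show "\<exists>k\<in>{j..t}. sfpred t x s k" using P[of k] by (intro bexI[of _ k]) auto
    next
      assume "\<exists>k\<in>{j..t}. sfpred t x s k"
      then obtain k where k: "k \<in> {j..t}" "sfpred t x s k" by auto
      then show "\<exists>k\<in>S. j \<le> k" using P[of k] j unfolding S_def tsum by (intro bexI[of _ k]) auto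
    qed
    finally show ?thesis using eq p1 False by simp
  qed
qed

lemma sfM_lower:
  assumes c: "0 \<le> c" and N1: "1 \<le> card {i\<in>{1..t}. c < x i}"
    and Ss: "(\<Sum>i\<in>{i\<in>{1..t}. c < x i}. x i) \<le> s"
  shows "card {i\<in>{1..t}. c < x i} \<le> sfM t x s"
proof -
  define G where "G = {i\<in>{1..t}. c < x i}"
  define N where "N = card G"
  have Nt: "N \<le> t"
  proof -
    have "N \<le> card {1..t}" unfolding N_def G_def by (intro card_mono) auto
    then show ?thesis by simp
  qed
  have N1': "1 \<le> N" using N1 by (simp add: N_def G_def)
  have sm: "(\<Sum>l\<in>{1..t}. max 0 (x l - y)) = (\<Sum>l\<in>G. x l - y) " if "c \<le> y" "y \<le> c" for y
  proof -
    have "(\<Sum>l\<in>{1..t}. max 0 (x l - y)) = (\<Sum>l\<in>{1..t}. if c < x l then x l - y else 0)"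
      using that by (intro sum.cong) auto
    also have "\<dots> = (\<Sum>l\<in>G. x l - y)" unfolding G_def by (rule sum.inter_filter[symmetric]) simp
    finally show ?thesis .
  qed
  have sumG: "(\<Sum>l\<in>G. x l - c) = sum x G - real N * c"
    by (simp add: sum_subtractf N_def)
  have "topsum N (map x [1..<t+1]) \<le> real N * c + sum_list (map (\<lambda>y. max 0 (y - c)) (map x [1..<t+1]))"
    using Nt by (intro topsum_le) simp
  also have "sum_list (map (\<lambda>y. max 0 (y - c)) (map x [1..<t+1])) = (\<Sum>l\<in>{1..t}. max 0 (x l - c))"
    by (simp only: map_map o_def sum_list_upt_map)
  finally have tN: "topsum N (map x [1..<t+1]) \<le> sum x G" using sm[of c] sumG by simp
  have "topsum 1 (map x [1..<t+1]) \<le> real 1 * c + sum_list (map (\<lambda>y. max 0 (y - c)) (map x [1..<t+1]))"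
    using N1' Nt by (intro topsum_le) simp
  also have "sum_list (map (\<lambda>y. max 0 (y - c)) (map x [1..<t+1])) = (\<Sum>l\<in>{1..t}. max 0 (x l - c))"
    by (simp only: map_map o_def sum_list_upt_map)
  finally have t1: "topsum 1 (map x [1..<t+1]) \<le> c + sum x G - real N * c" using sm[of c] sumG by simp
  have "c \<le> real N * c" using mult_right_mono[of 1 "real N" c] c N1' by simp
  then have "c + sum x G - real N * c \<le> sum x G" by linarith
  have SsG: "sum x G \<le> s" using Ss by (simp add: G_def)
  then have t1': "topsum 1 (map x [1..<t+1]) \<le> s" using t1 \<open>c + sum x G - real N * c \<le> sum x G\<close> by linarith
  have tN': "topsum N (map x [1..<t+1]) \<le> s" using tN SsG by linarith
  have "N \<le> sfM t x s"
    using sfM_ge[OF N1', of t x s] topsum_sfpred[of 1 t x s] topsum_sfpred[of N t x s] N1' Nt t1' tN'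
    by auto
  then show ?thesis by (simp add: N_def G_def)
qed

lemma nat_measI:
  assumes "\<And>j. {\<omega>\<in>space N. f \<omega> = j} \<in> sets N"
  shows "(f::_\<Rightarrow>nat) \<in> measurable N (count_space UNIV)"
proof -
  have "f -` {a} \<inter> space N = {\<omega>\<in>space N. f \<omega> = a}" for a by auto
  then show ?thesis using assms by (simp add: measurable_count_space_eq2_countable)
qed

lemma sfM_fixed_meas:
  assumes [measurable]: "\<And>k. XX k \<in> borel_measurable N" "S \<in> borel_measurable N"
  shows "(\<lambda>\<omega>. sfM t (\<lambda>k. XX k \<omega>) (S \<omega>)) \<in> measurable N (count_space UNIV)"
proof (rule nat_measI)
  fix j
  define P where "P j \<omega> = (1 \<le> t \<and> sfpred t (\<lambda>k. XX k \<omega>) (S \<omega>) 1 \<and> (\<exists>k\<in>{j..t}. sfpred t (\<lambda>k. XX k \<omega>) (S \<omega>) k))" for j \<omega>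
  have Pm: "{\<omega>\<in>space N. P j \<omega>} \<in> sets N" for j
    unfolding P_def sfpred_def by measurable
  have ge: "j \<le> sfM t (\<lambda>k. XX k \<omega>) (S \<omega>) \<longleftrightarrow> P j \<omega>" if "1 \<le> j" for j \<omega>
    unfolding P_def using that by (rule sfM_ge)
  show "{\<omega>\<in>space N. sfM t (\<lambda>k. XX k \<omega>) (S \<omega>) = j} \<in> sets N"
  proof (cases "j = 0")
    case True
    have g1: "(sfM t (\<lambda>k. XX k \<omega>) (S \<omega>) = 0) = (\<not> P 1 \<omega>)" for \<omega>
    proof -
      have "1 \<le> sfM t (\<lambda>k. XX k \<omega>) (S \<omega>) \<longleftrightarrow> P 1 \<omega>" by (rule ge) simp
      then show ?thesis by linarith
    qed
    have "{\<omega>\<in>space N. sfM t (\<lambda>k. XX k \<omega>) (S \<omega>) = j} = space N - {\<omega>\<in>space N. P 1 \<omega>}"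
      using g1 True by auto
    then show ?thesis using Pm by auto
  next
    case False
    have gj: "(sfM t (\<lambda>k. XX k \<omega>) (S \<omega>) = j) = (P j \<omega> \<and> \<not> P (Suc j) \<omega>)" for \<omega>
    proof -
      have "j \<le> sfM t (\<lambda>k. XX k \<omega>) (S \<omega>) \<longleftrightarrow> P j \<omega>" by (rule ge) (use False in simp)
      moreover have "Suc j \<le> sfM t (\<lambda>k. XX k \<omega>) (S \<omega>) \<longleftrightarrow> P (Suc j) \<omega>" by (rule ge) simp
      ultimately show ?thesis by linarith
    qed
    have "{\<omega>\<in>space N. sfM t (\<lambda>k. XX k \<omega>) (S \<omega>) = j} = {\<omega>\<in>space N. P j \<omega>} - {\<omega>\<in>space N. P (Suc j) \<omega>}"
      using gj by blast
    then show ?thesis using Pm by auto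
  qed
qed

lemma (in prob_space) sum_dev:
  fixes Y :: "nat \<Rightarrow> 'a \<Rightarrow> real" and I :: "nat set"
  assumes fin: "finite I" and card: "card I = n" and npos: "0 < n"
    and meas: "\<And>i. i \<in> I \<Longrightarrow> Y i \<in> borel_measurable M"
    and sq: "\<And>i. i \<in> I \<Longrightarrow> integrable M (\<lambda>\<omega>. (Y i \<omega>)^2)"
    and ind: "\<And>i j. i \<in> I \<Longrightarrow> j \<in> I \<Longrightarrow> i \<noteq> j \<Longrightarrow> indep_var borel (Y i) borel (Y j)"
    and mean: "\<And>i. i \<in> I \<Longrightarrow> expectation (Y i) = a"
    and sec: "\<And>i. i \<in> I \<Longrightarrow> expectation (\<lambda>\<omega>. (Y i \<omega>)^2) = b"
    and eta: "0 < \<eta>"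
  shows "prob {\<omega>\<in>space M. \<eta> * real n \<le> \<bar>(\<Sum>i\<in>I. Y i \<omega>) - real n * a\<bar>} \<le> (b - a^2) / (\<eta>^2 * real n)"
proof -
  define f where "f \<omega> = (\<Sum>i\<in>I. Y i \<omega>)" for \<omega>
  have intY: "integrable M (Y i)" if "i \<in> I" for i
    using square_integrable_imp_integrable[OF meas[OF that] sq[OF that]] .
  have prodint: "integrable M (\<lambda>\<omega>. Y i \<omega> * Y j \<omega>)" if "i \<in> I" "j \<in> I" for i j
  proof (cases "i = j")
    case True then show ?thesis using sq[OF that(1)] by (simp add: power2_eq_square)
  next
    case False then show ?thesis using ind[OF that False] intY that by (intro indep_var_integrable) auto
  qed
  have prodexp: "expectation (\<lambda>\<omega>. Y i \<omega> * Y j \<omega>) = (if i = j then b else a * a)" if "i \<in> I" "j \<in> I" for i j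
  proof (cases "i = j")
    case True then show ?thesis using sec[OF that(1)] by (simp add: power2_eq_square)
  next
    case False then show ?thesis using ind[OF that False] intY that mean by (subst indep_var_lebesgue_integral) auto
  qed
  have fmeas: "f \<in> borel_measurable M" unfolding f_def using meas by (intro borel_measurable_sum) auto
  have fsq: "(\<lambda>\<omega>. (f \<omega>)^2) = (\<lambda>\<omega>. \<Sum>i\<in>I. \<Sum>j\<in>I. Y i \<omega> * Y j \<omega>)"
    by (rule ext) (simp only: f_def power2_eq_square sum_product)
  have fsqint: "integrable M (\<lambda>\<omega>. (f \<omega>)^2)" unfolding fsq using prodint by auto
  have fint: "integrable M f" unfolding f_def using intY by auto
  have Ef: "expectation f = real n * a" unfolding f_def using intY mean card
    by (subst Bochner_Integration.integral_sum) auto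
  have inner: "(\<Sum>j\<in>I. if i = j then b else a * a) = b + real (n - 1) * (a * a)" if "i \<in> I" for i
  proof -
    have "(\<Sum>j\<in>I. if i = j then b else a * a) = (if i = i then b else a * a) + (\<Sum>j\<in>I - {i}. if i = j then b else a * a)"
      using fin that by (rule sum.remove)
    also have "(\<Sum>j\<in>I - {i}. if i = j then b else a * a) = (\<Sum>j\<in>I - {i}. a * a)" by (intro sum.cong) auto
    also have "\<dots> = real (n - 1) * (a * a)" using card fin that by simp
    finally show ?thesis by simp
  qed
  have Ef2: "expectation (\<lambda>\<omega>. (f \<omega>)^2) = real n * (b + real (n - 1) * (a * a))"
  proof -
    have "expectation (\<lambda>\<omega>. (f \<omega>)^2) = (\<Sum>i\<in>I. expectation (\<lambda>\<omega>. \<Sum>j\<in>I. Y i \<omega> * Y j \<omega>))"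
      unfolding fsq by (rule Bochner_Integration.integral_sum) (use prodint in auto)
    also have "\<dots> = (\<Sum>i\<in>I. \<Sum>j\<in>I. expectation (\<lambda>\<omega>. Y i \<omega> * Y j \<omega>))"
      by (intro sum.cong refl Bochner_Integration.integral_sum) (use prodint in auto)
    also have "\<dots> = (\<Sum>i\<in>I. \<Sum>j\<in>I. if i = j then b else a * a)"
      using prodexp by (intro sum.cong) auto
    also have "\<dots> = (\<Sum>i\<in>I. b + real (n - 1) * (a * a))" using inner by (intro sum.cong) auto
    also have "\<dots> = real n * (b + real (n - 1) * (a * a))" using card by simp
    finally show ?thesis .
  qed
  have var: "variance f = real n * (b - a^2)"
  proof -
    have "variance f = expectation (\<lambda>\<omega>. (f \<omega>)^2) - (expectation f)^2"
      using fint fsqint by (rule variance_eq)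
    also have "\<dots> = real n * (b - a^2)" unfolding Ef2 Ef using npos
      by (simp add: of_nat_diff power2_eq_square algebra_simps)
    finally show ?thesis .
  qed
  have pos: "0 < \<eta> * real n" using eta npos by simp
  have "prob {\<omega>\<in>space M. \<eta> * real n \<le> \<bar>f \<omega> - expectation f\<bar>} \<le> variance f / (\<eta> * real n)^2"
    using Chebyshev_inequality[OF fmeas fsqint pos] by simp
  also have "\<dots> = (real n * (b - a^2)) / (real n * (\<eta>^2 * real n))" unfolding var
    by (simp add: power2_eq_square mult_ac)
  also have "\<dots> = (b - a^2) / (\<eta>^2 * real n)"
    by (rule mult_divide_mult_cancel_left) (use npos in simp)
  finally show ?thesis unfolding Ef f_def .
qed

locale sfsetting = prob_space M for M :: "'a measure" +
  fixes D :: "nat \<Rightarrow> nat \<Rightarrow> 'a \<Rightarrow> nat"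
    and X R :: "nat \<Rightarrow> nat \<Rightarrow> 'a \<Rightarrow> real"
    and \<theta> :: real
  assumes D_meas: "\<And>n k. D n k \<in> measurable M (count_space UNIV)"
    and X_meas: "\<And>n k. X n k \<in> borel_measurable M"
    and R_meas: "\<And>n k. R n k \<in> borel_measurable M"
    and indep: "indep_vars (\<lambda>_. borel) (allvars D X R) allidx"
    and D_id: "\<And>n k. k \<ge> 1 \<Longrightarrow>
        distr M (count_space UNIV) (D n k) = distr M (count_space UNIV) (D 0 1)"
    and X_id: "\<And>n k. k \<ge> 1 \<Longrightarrow> distr M borel (X n k) = distr M borel (X 0 1)"
    and R_id: "\<And>n k. k \<ge> 1 \<Longrightarrow> distr M borel (R n k) = distr M borel (R 0 1)"
    and X_nonneg: "\<And>n k \<omega>. \<omega> \<in> space M \<Longrightarrow> X n k \<omega> \<ge> 0"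
    and F_cont: "\<And>x. isCont (cdf (distr M borel (X 0 1))) x"
    and D_var: "integrable M (\<lambda>\<omega>. (real (D 0 1 \<omega>))\<^sup>2)"
    and X_var: "integrable M (\<lambda>\<omega>. (X 0 1 \<omega>)\<^sup>2)"
    and R_var: "integrable M (\<lambda>\<omega>. (R 0 1 \<omega>)\<^sup>2)"
    and m_gt1: "(\<integral>\<omega>. real (D 0 1 \<omega>) \<partial>M) > 1"
    and X_bdd: "\<exists>B. \<forall>n k. \<forall>\<omega>\<in>space M. X n k \<omega> \<le> B"
    and theta: "(LINT x : {\<theta>..Sup (cdf_support (cdf (distr M borel (X 0 1)))) } | distr M borel (X 0 1). x)
        = (\<integral>\<omega>. R 0 1 \<omega> \<partial>M) / (\<integral>\<omega>. real (D 0 1 \<omega>) \<partial>M)"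
    and supercrit: "(\<integral>\<omega>. real (D 0 1 \<omega>) \<partial>M) * (1 - cdf (distr M borel (X 0 1)) \<theta>) > 1"
begin

abbreviation "F \<equiv> cdf (distr M borel (X 0 1))"
abbreviation "mm \<equiv> (\<integral>\<omega>. real (D 0 1 \<omega>) \<partial>M)"
abbreviation "rr \<equiv> (\<integral>\<omega>. R 0 1 \<omega> \<partial>M)"

lemma Xm[measurable]: "X n k \<in> borel_measurable M" by (rule X_meas)
lemma Rm[measurable]: "R n k \<in> borel_measurable M" by (rule R_meas)
lemma Dm[measurable]: "D n k \<in> measurable M (count_space UNIV)" by (rule D_meas)

lemma F_eq: "F x = prob {\<omega>\<in>space M. X 0 1 \<omega> \<le> x}"
proof -
  have "F x = measure (distr M borel (X 0 1)) {..x}" by (simp add: cdf_def)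
  also have "\<dots> = prob (X 0 1 -` {..x} \<inter> space M)" by (subst measure_distr) auto
  also have "X 0 1 -` {..x} \<inter> space M = {\<omega>\<in>space M. X 0 1 \<omega> \<le> x}" by auto
  finally show ?thesis .
qed

lemma F_compl: "1 - F x = prob {\<omega>\<in>space M. x < X 0 1 \<omega>}"
proof -
  have "{\<omega>\<in>space M. x < X 0 1 \<omega>} = space M - {\<omega>\<in>space M. X 0 1 \<omega> \<le> x}" by auto
  then show ?thesis unfolding F_eq by (simp add: prob_compl)
qed

lemma F_mono: "x \<le> y \<Longrightarrow> F x \<le> F y"
  unfolding F_eq by (intro finite_measure_mono) auto

lemma F_le1: "F x \<le> 1"
  unfolding F_eq by simp

lemma F_ge0: "0 \<le> F x"
  unfolding F_eq by simp

definition "B0 = (SOME B. \<forall>n k. \<forall>\<omega>\<in>space M. X n k \<omega> \<le> B)"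

lemma B0: "\<omega> \<in> space M \<Longrightarrow> X n k \<omega> \<le> B0"
  using someI_ex[OF X_bdd] unfolding B0_def by blast

lemma F_one: "B0 \<le> x \<Longrightarrow> F x = 1"
proof -
  assume "B0 \<le> x"
  then have "{\<omega>\<in>space M. X 0 1 \<omega> \<le> x} = space M" using B0[of _ 0 1] by force
  then show ?thesis unfolding F_eq by (simp add: prob_space)
qed

lemma F_neg: "x < 0 \<Longrightarrow> F x = 0"
proof -
  assume "x < 0"
  then have e: "{\<omega>\<in>space M. X 0 1 \<omega> \<le> x} = {}" using X_nonneg[of _ 0 1] by force
  show ?thesis unfolding F_eq e by simp
qed

lemma F_zero: "F 0 = 0"
proof -
  have c: "(F \<longlongrightarrow> F 0) (at_left 0)"
    using F_cont[of 0] by (simp add: isCont_def filterlim_at_split)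
  have "eventually (\<lambda>x. F x = 0) (at_left (0::real))"
    using eventually_at_left_real[of "-1" "0::real"]
  proof (rule eventually_mono)
    fix x :: real assume "x \<in> {-1<..<0}"
    then have "x < 0" by simp
    then show "F x = 0" by (rule F_neg)
  qed simp
  then have z: "(F \<longlongrightarrow> 0) (at_left (0::real))"
    by (rule tendsto_eventually)
  show ?thesis using tendsto_unique[OF _ c z] by simp
qed

abbreviation "bb \<equiv> Sup (cdf_support F)"

lemma supp_bdd: "cdf_support F \<subseteq> {..B0}"
proof
  fix x assume x: "x \<in> cdf_support F"
  show "x \<in> {..B0}"
  proof (rule ccontr)
    assume "x \<notin> {..B0}"
    then have e: "x - B0 > 0" by auto
    have "F (x + (x - B0)) = 1" using e by (intro F_one) simp
    moreover have "F (x - (x - B0)) = 1" by (intro F_one) simp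
    ultimately have "F (x + (x - B0)) - F (x - (x - B0)) = 0" by simp
    moreover have "0 < F (x + (x - B0)) - F (x - (x - B0))"
      using x e unfolding cdf_support_def by blast
    ultimately show False by simp
  qed
qed

lemma F_bb: "F bb = 1"
proof (rule ccontr)
  assume ne: "F bb \<noteq> 1"
  then have lt: "F bb < 1" using F_le1[of bb] by simp
  define A where "A = {x. F x < 1}"
  have bA: "bb \<in> A" using lt by (simp add: A_def)
  have xB: "x \<le> B0" if "F x < 1" for x
  proof (rule ccontr)
    assume "\<not> x \<le> B0"
    then have "F x = 1" by (intro F_one) simp
    with that show False by simp
  qed
  have Abdd: "bdd_above A" unfolding A_def bdd_above_def by (intro exI[of _ B0] ballI xB) simp
  define x0 where "x0 = Sup A"
  have bx0: "bb \<le> x0" unfolding x0_def using bA Abdd by (rule cSup_upper)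
  have x0supp: "x0 \<in> cdf_support F"
    unfolding cdf_support_def
  proof (intro CollectI allI impI)
    fix e :: real assume e: "0 < e"
    have "x0 + e \<notin> A"
    proof
      assume "x0 + e \<in> A"
      then have "x0 + e \<le> x0" unfolding x0_def using Abdd by (rule cSup_upper)
      with e show False by simp
    qed
    then have f1: "F (x0 + e) = 1" using F_le1[of "x0+e"] by (simp add: A_def)
    have "x0 - e < Sup A" using e by (simp add: x0_def)
    then obtain a where a: "a \<in> A" "x0 - e < a" using bA by (subst (asm) less_cSup_iff) (auto simp: Abdd)
    then have "F (x0 - e) < 1" using F_mono[of "x0 - e" a] by (simp add: A_def)
    then show "0 < F (x0 + e) - F (x0 - e)" using f1 by simp
  qed
  have sbdd: "bdd_above (cdf_support F)" using supp_bdd by (auto simp: bdd_above_def)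
  have "x0 \<le> bb" using x0supp sbdd by (rule cSup_upper)
  then have x0b: "x0 = bb" using bx0 by simp
  have "\<exists>s>0. \<forall>y. y \<noteq> bb \<and> norm (y - bb) < s \<longrightarrow> norm (F y - F bb) < 1 - F bb"
    using F_cont[of bb] lt unfolding isCont_def LIM_eq by simp
  then obtain s where s: "s > 0" "\<And>y. y \<noteq> bb \<Longrightarrow> norm (y - bb) < s \<Longrightarrow> norm (F y - F bb) < 1 - F bb"
    by blast
  have "norm (F (bb + s/2) - F bb) < 1 - F bb" using s by (intro s(2)) auto
  then have "F (bb + s/2) < 1" by simp
  then have "bb + s/2 \<in> A" by (simp add: A_def)
  then have "bb + s/2 \<le> x0" unfolding x0_def using Abdd by (rule cSup_upper)
  with x0b s show False by simp
qed

lemma AE_le_bb: "AE \<omega> in M. X 0 1 \<omega> \<le> bb"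
proof -
  have "prob {\<omega>\<in>space M. bb < X 0 1 \<omega>} = 0" using F_compl[of bb] F_bb by simp
  then have "{\<omega>\<in>space M. bb < X 0 1 \<omega>} \<in> null_sets M"
    by (subst null_sets_def) (auto simp: emeasure_eq_measure)
  then show ?thesis by (rule AE_I') auto
qed


lemma X_int: "integrable M (X 0 1)"
  by (rule square_integrable_imp_integrable[OF X_meas X_var])

lemma theta1:
  obtains \<theta>1 where "0 < \<theta>1" "mm * (1 - F \<theta>1) > 1"
    "mm * expectation (\<lambda>\<omega>. if \<theta>1 < X 0 1 \<omega> then X 0 1 \<omega> else 0) < rr"
proof -
  define \<theta>' where "\<theta>' = max \<theta> 0"
  have F\<theta>': "F \<theta>' = F \<theta>"
  proof (cases "0 \<le> \<theta>")
    case True then show ?thesis by (simp add: \<theta>'_def)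
  next
    case False
    then have "F \<theta> = 0" by (intro F_neg) simp
    then show ?thesis using False F_zero by (simp add: \<theta>'_def)
  qed
  have m1: "mm > 1" by (rule m_gt1)
  have lt: "1 / mm < 1 - F \<theta>"
  proof -
    have "1 < mm * (1 - F \<theta>)" by (rule supercrit)
    then show ?thesis using m1 by (simp add: field_simps)
  qed
  define p where "p = 1 / mm"
  have mp: "mm * p = 1" using m1 by (simp add: p_def)
  have lt': "p < 1 - F \<theta>" using lt by (simp add: p_def)
  have mpos: "0 < p" using m1 by (simp add: p_def)
  define \<eta> where "\<eta> = ((1 - F \<theta>) - p) / 2"
  have eta: "0 < \<eta>" using lt' by (simp add: \<eta>_def)
  define y where "y = F \<theta> + \<eta>"
  have omy: "1 - y = ((1 - F \<theta>) + p) / 2" by (simp add: y_def \<eta>_def field_simps)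
  have y1: "y < 1"
  proof -
    define a where "a = F \<theta>"
    have "1 - y = ((1 - a) + p) / 2" "p < 1 - a" using omy lt' by (simp_all add: a_def)
    then show ?thesis using mpos by argo
  qed
  have omy2: "p < 1 - y"
  proof -
    define a where "a = F \<theta>"
    have "1 - y = ((1 - a) + p) / 2" "p < 1 - a" using omy lt' by (simp_all add: a_def)
    then show ?thesis by argo
  qed
  have my: "1 < mm * (1 - y)"
  proof -
    have "mm * p < mm * (1 - y)" using omy2 m1 by (intro mult_strict_left_mono) auto
    then show ?thesis using mp by simp
  qed
  define Bm where "Bm = max B0 0"
  have \<theta>B: "\<theta> \<le> B0"
  proof (rule ccontr)
    assume "\<not> \<theta> \<le> B0"
    then have "F \<theta> = 1" by (intro F_one) simp
    with lt' mpos show False by simp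
  qed
  have \<theta>'Bm: "\<theta>' \<le> Bm" unfolding \<theta>'_def Bm_def using \<theta>B by simp
  have FBm: "F Bm = 1" by (intro F_one) (simp add: Bm_def)
  have cont: "continuous_on {\<theta>'..Bm} F"
    by (intro continuous_at_imp_continuous_on ballI F_cont)
  obtain \<theta>1 where t1: "\<theta>' \<le> \<theta>1" "\<theta>1 \<le> Bm" "F \<theta>1 = y"
    using IVT'[of F \<theta>' y Bm, OF _ _ \<theta>'Bm cont] F\<theta>' eta y1 FBm by (auto simp: y_def)
  have t1ne: "\<theta>1 \<noteq> \<theta>'" using t1(3) F\<theta>' eta by (auto simp: y_def)
  have t1gt: "\<theta>' < \<theta>1" using t1(1) t1ne by simp
  have t1pos: "0 < \<theta>1" using t1gt by (simp add: \<theta>'_def)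
  have q: "mm * (1 - F \<theta>1) > 1" using my t1(3) by simp
  define gg where "gg \<omega> = (if \<theta>1 < X 0 1 \<omega> then X 0 1 \<omega> else 0)" for \<omega>
  define h1 where "h1 \<omega> = (if \<theta>' < X 0 1 \<omega> \<and> X 0 1 \<omega> \<le> \<theta>1 then X 0 1 \<omega> else 0)" for \<omega>
  define ib where "ib \<omega> = indicator {\<theta>..bb} (X 0 1 \<omega>) * X 0 1 \<omega>" for \<omega>
  define hb where "hb \<omega> = (if bb < X 0 1 \<omega> then X 0 1 \<omega> else 0)" for \<omega>
  have Xi: "integrable M (X 0 1)" by (rule X_int)
  have [measurable]: "gg \<in> borel_measurable M" unfolding gg_def by measurable
  have [measurable]: "h1 \<in> borel_measurable M" unfolding h1_def by measurable
  have [measurable]: "ib \<in> borel_measurable M" unfolding ib_def by measurable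
  have [measurable]: "hb \<in> borel_measurable M" unfolding hb_def by measurable
  have ggi: "integrable M gg"
    by (rule Bochner_Integration.integrable_bound[OF Xi]) (auto simp: gg_def X_nonneg)
  have h1i: "integrable M h1"
    by (rule Bochner_Integration.integrable_bound[OF Xi]) (auto simp: h1_def X_nonneg)
  have ibi: "integrable M ib"
    by (rule Bochner_Integration.integrable_bound[OF Xi]) (auto simp: ib_def X_nonneg indicator_def)
  have hbi: "integrable M hb"
    by (rule Bochner_Integration.integrable_bound[OF Xi]) (auto simp: hb_def X_nonneg)
  have Ehb: "expectation hb = 0"
  proof (rule integral_eq_zero_AE)
    show "AE \<omega> in M. hb \<omega> = 0" using AE_le_bb by (rule AE_mp) (auto simp: hb_def)
  qed
  have Eib: "expectation ib = rr / mm"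
  proof -
    have "(LINT x : {\<theta>..bb} | distr M borel (X 0 1). x) = integral\<^sup>L (distr M borel (X 0 1)) (\<lambda>x. indicator {\<theta>..bb} x *\<^sub>R x)"
      by (simp add: set_lebesgue_integral_def)
    also have "\<dots> = expectation ib" unfolding ib_def by (subst integral_distr) auto
    finally show ?thesis using theta by simp
  qed
  have pw: "gg \<omega> + h1 \<omega> \<le> ib \<omega> + hb \<omega>" if "\<omega> \<in> space M" for \<omega>
  proof -
    have x0: "0 \<le> X 0 1 \<omega>" using X_nonneg[OF that] .
    have "\<theta> \<le> \<theta>'" by (simp add: \<theta>'_def)
    show ?thesis
      unfolding gg_def h1_def ib_def hb_def using x0 t1gt \<open>\<theta> \<le> \<theta>'\<close>
      by (auto simp: indicator_def)
  qed
  have sumle: "expectation gg + expectation h1 \<le> rr / mm"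
  proof -
    have "expectation gg + expectation h1 = expectation (\<lambda>\<omega>. gg \<omega> + h1 \<omega>)"
      using ggi h1i by simp
    also have "\<dots> \<le> expectation (\<lambda>\<omega>. ib \<omega> + hb \<omega>)"
      using ggi h1i ibi hbi pw by (intro integral_mono) auto
    also have "\<dots> = rr / mm" using ibi hbi Ehb Eib by simp
    finally show ?thesis .
  qed
  have Eh1: "0 < expectation h1"
  proof (rule ccontr)
    assume "\<not> 0 < expectation h1"
    moreover have "0 \<le> expectation h1" by (intro integral_nonneg_AE AE_I2) (simp add: h1_def X_nonneg)
    ultimately have "expectation h1 = 0" by simp
    then have ae: "AE \<omega> in M. h1 \<omega> = 0"
      using integral_nonneg_eq_0_iff_AE[OF h1i] by (auto simp: h1_def X_nonneg)
    define S where "S = {\<omega>\<in>space M. \<theta>' < X 0 1 \<omega> \<and> X 0 1 \<omega> \<le> \<theta>1}"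
    have Ssets: "S \<in> sets M" unfolding S_def by measurable
    have "AE \<omega> in M. \<omega> \<notin> S"
      using ae by (rule AE_mp) (auto simp: S_def h1_def \<theta>'_def)
    then have "emeasure M S = 0" using AE_iff_measurable[OF Ssets, of "\<lambda>\<omega>. \<omega> \<notin> S"] by (auto simp: S_def)
    then have p0: "prob S = 0" by (simp add: emeasure_eq_measure)
    have Seq: "S = {\<omega>\<in>space M. X 0 1 \<omega> \<le> \<theta>1} - {\<omega>\<in>space M. X 0 1 \<omega> \<le> \<theta>'}"
      unfolding S_def by auto
    have "prob ({\<omega>\<in>space M. X 0 1 \<omega> \<le> \<theta>1} - {\<omega>\<in>space M. X 0 1 \<omega> \<le> \<theta>'})
       = prob {\<omega>\<in>space M. X 0 1 \<omega> \<le> \<theta>1} - prob {\<omega>\<in>space M. X 0 1 \<omega> \<le> \<theta>'}"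
      using t1gt by (intro finite_measure_Diff) auto
    then have "prob S = F \<theta>1 - F \<theta>'" unfolding F_eq Seq .
    then have "prob S = \<eta>" using t1(3) F\<theta>' by (simp add: y_def)
    with p0 eta show False by simp
  qed
  have "expectation gg < rr / mm" using sumle Eh1 by linarith
  then have "mm * expectation gg < rr" using m1 by (simp add: field_simps)
  then show ?thesis using that[OF t1pos q] unfolding gg_def[abs_def] by blast
qed

end

context sfsetting begin

abbreviation "V c n i \<equiv> allvars D X R (c, n, i)"

lemma V_simps: "V 0 n i = (\<lambda>\<omega>. real (D n i \<omega>))" "V (Suc 0) n i = X n i" "V 2 n i = R n i"
  by (auto simp: allvars_def fun_eq_iff)

lemma V_meas[measurable]: "V c n i \<in> borel_measurable M"
  unfolding allvars_def by measurable

lemma V_id: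
  assumes "1 \<le> i" "c \<in> {0,1,2}"
  shows "distr M borel (V c n i) = distr M borel (V c 0 1)"
proof -
  consider "c = 0" | "c = 1" | "c = 2" using assms(2) by auto
  then show ?thesis
  proof cases
    case 1
    have "distr M borel (V c n i) = distr (distr M (count_space UNIV) (D n i)) borel real" for n i
      using 1 by (subst distr_distr) (auto simp: V_simps o_def)
    then show ?thesis using D_id[OF assms(1)] by simp
  next
    case 2
    then show ?thesis using X_id[OF assms(1)] by (simp add: V_simps)
  next
    case 3
    then show ?thesis using R_id[OF assms(1)] by (simp add: V_simps)
  qed
qed

lemma V_trans_int:
  fixes h :: "real \<Rightarrow> real"
  assumes "1 \<le> i" "c \<in> {0,1,2}" and h[measurable]: "h \<in> borel_measurable borel"
  shows "integrable M (\<lambda>\<omega>. h (V c n i \<omega>)) \<longleftrightarrow> integrable M (\<lambda>\<omega>. h (V c 0 1 \<omega>))"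
proof -
  have "integrable M (\<lambda>\<omega>. h (V c n i \<omega>)) \<longleftrightarrow> integrable (distr M borel (V c n i)) h"
    by (rule integrable_distr_eq[symmetric]) auto
  also have "\<dots> \<longleftrightarrow> integrable (distr M borel (V c 0 1)) h" using V_id[OF assms(1,2)] by simp
  also have "\<dots> \<longleftrightarrow> integrable M (\<lambda>\<omega>. h (V c 0 1 \<omega>))"
    by (rule integrable_distr_eq) auto
  finally show ?thesis .
qed

lemma V_trans_exp:
  fixes h :: "real \<Rightarrow> real"
  assumes "1 \<le> i" "c \<in> {0,1,2}" and h[measurable]: "h \<in> borel_measurable borel"
  shows "expectation (\<lambda>\<omega>. h (V c n i \<omega>)) = expectation (\<lambda>\<omega>. h (V c 0 1 \<omega>))"
proof -
  have "expectation (\<lambda>\<omega>. h (V c n i \<omega>)) = integral\<^sup>L (distr M borel (V c n i)) h"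
    by (rule integral_distr[symmetric]) auto
  also have "\<dots> = integral\<^sup>L (distr M borel (V c 0 1)) h" using V_id[OF assms(1,2)] by simp
  also have "\<dots> = expectation (\<lambda>\<omega>. h (V c 0 1 \<omega>))"
    by (rule integral_distr) auto
  finally show ?thesis .
qed

lemma indep_pair:
  fixes h h' :: "real \<Rightarrow> real"
  assumes "a \<in> allidx" "a' \<in> allidx" "a \<noteq> a'"
    and h: "h \<in> borel_measurable borel" and h': "h' \<in> borel_measurable borel"
  shows "indep_var borel (\<lambda>\<omega>. h (allvars D X R a \<omega>)) borel (\<lambda>\<omega>. h' (allvars D X R a' \<omega>))"
proof -
  have iv: "indep_var (PiM {a} (\<lambda>_. borel)) (\<lambda>\<omega>. restrict (\<lambda>i. allvars D X R i \<omega>) {a})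
      (PiM {a'} (\<lambda>_. borel)) (\<lambda>\<omega>. restrict (\<lambda>i. allvars D X R i \<omega>) {a'})"
    using assms by (intro indep_var_restrict[OF indep]) auto
  have m1: "(\<lambda>v. h (v a)) \<in> measurable (PiM {a} (\<lambda>_. borel)) borel" using h by measurable
  have m2: "(\<lambda>v. h' (v a')) \<in> measurable (PiM {a'} (\<lambda>_. borel)) borel" using h' by measurable
  have "indep_var borel ((\<lambda>v. h (v a)) \<circ> (\<lambda>\<omega>. restrict (\<lambda>i. allvars D X R i \<omega>) {a}))
      borel ((\<lambda>v. h' (v a')) \<circ> (\<lambda>\<omega>. restrict (\<lambda>i. allvars D X R i \<omega>) {a'}))"
    by (rule indep_var_compose[OF iv m1 m2])
  moreover have "((\<lambda>v. h (v a)) \<circ> (\<lambda>\<omega>. restrict (\<lambda>i. allvars D X R i \<omega>) {a})) = (\<lambda>\<omega>. h (allvars D X R a \<omega>))"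
    by (auto simp: fun_eq_iff)
  moreover have "((\<lambda>v. h' (v a')) \<circ> (\<lambda>\<omega>. restrict (\<lambda>i. allvars D X R i \<omega>) {a'})) = (\<lambda>\<omega>. h' (allvars D X R a' \<omega>))"
    by (auto simp: fun_eq_iff)
  ultimately show ?thesis by simp
qed

lemma cheb_level:
  fixes h :: "real \<Rightarrow> real"
  assumes c: "c \<in> {0,1,2}" and h[measurable]: "h \<in> borel_measurable borel"
    and sqi: "integrable M (\<lambda>\<omega>. (h (V c 0 1 \<omega>))^2)"
    and I: "finite I" "I \<subseteq> {1..}" "card I = k" "0 < k" and eta: "0 < \<eta>"
  shows "prob {\<omega>\<in>space M. \<eta> * real k \<le> \<bar>(\<Sum>i\<in>I. h (V c n i \<omega>)) - real k * expectation (\<lambda>\<omega>. h (V c 0 1 \<omega>))\<bar>}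
    \<le> (expectation (\<lambda>\<omega>. (h (V c 0 1 \<omega>))^2) - (expectation (\<lambda>\<omega>. h (V c 0 1 \<omega>)))^2) / (\<eta>^2 * real k)"
proof (rule sum_dev[OF I(1,3,4) _ _ _ _ _ eta])
  fix i assume i: "i \<in> I"
  then have i1: "1 \<le> i" using I(2) by auto
  show "(\<lambda>\<omega>. h (V c n i \<omega>)) \<in> borel_measurable M" by measurable
  have hsq: "(\<lambda>x. (h x)^2) \<in> borel_measurable borel" by measurable
  show "integrable M (\<lambda>\<omega>. (h (V c n i \<omega>))^2)"
    using V_trans_int[OF i1 c hsq, of n] sqi by simp
  show "expectation (\<lambda>\<omega>. h (V c n i \<omega>)) = expectation (\<lambda>\<omega>. h (V c 0 1 \<omega>))"
    by (rule V_trans_exp[OF i1 c h])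
  show "expectation (\<lambda>\<omega>. (h (V c n i \<omega>))^2) = expectation (\<lambda>\<omega>. (h (V c 0 1 \<omega>))^2)"
    using V_trans_exp[OF i1 c hsq, of n] by simp
next
  fix i j assume ij: "i \<in> I" "j \<in> I" "i \<noteq> j"
  then have "(c, n, i) \<in> allidx" "(c, n, j) \<in> allidx" "(c, n, i) \<noteq> (c, n, j)"
    using I(2) c by (auto simp: allidx_def)
  then show "indep_var borel (\<lambda>\<omega>. h (V c n i \<omega>)) borel (\<lambda>\<omega>. h (V c n j \<omega>))"
    by (rule indep_pair[OF _ _ _ h h])
qed

lemma var_nonneg:
  fixes f :: "'a \<Rightarrow> real"
  assumes [measurable]: "f \<in> borel_measurable M" and "integrable M (\<lambda>\<omega>. (f \<omega>)^2)"
  shows "0 \<le> expectation (\<lambda>\<omega>. (f \<omega>)^2) - (expectation f)^2"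
proof -
  have fi: "integrable M f" by (rule square_integrable_imp_integrable[OF assms(1) assms(2)])
  have "variance f = expectation (\<lambda>\<omega>. (f \<omega>)^2) - (expectation f)^2"
    using fi assms(2) by (rule variance_eq)
  then show ?thesis using variance_positive[of f] by simp
qed

end

context sfsetting begin

lemma allvars_simps:
  "allvars D X R (0, n, i) \<omega> = real (D n i \<omega>)"
  "allvars D X R (1, n, i) \<omega> = X n i \<omega>"
  "allvars D X R (2, n, i) \<omega> = R n i \<omega>"
  by (simp_all add: allvars_def)

definition "Lf \<delta> t = nat \<lfloor>real t * (mm - \<delta>)\<rfloor>"
definition "Uf \<delta> t = nat \<lfloor>real t * (mm + \<delta>)\<rfloor>"

definition indq :: "real \<Rightarrow> real \<Rightarrow> real" where "indq \<theta>1 x = (if \<theta>1 < x then 1 else 0)"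
definition capg :: "real \<Rightarrow> real \<Rightarrow> real" where "capg \<theta>1 x = (if \<theta>1 < x then x else 0)"

lemma indq_meas[measurable]: "indq \<theta>1 \<in> borel_measurable borel" unfolding indq_def by measurable
lemma capg_meas[measurable]: "capg \<theta>1 \<in> borel_measurable borel" unfolding capg_def by measurable

definition goodv :: "real \<Rightarrow> real \<Rightarrow> real \<Rightarrow> real \<Rightarrow> nat \<Rightarrow> nat \<Rightarrow> (nat \<times> nat \<times> nat \<Rightarrow> real) \<Rightarrow> bool" where
  "goodv \<delta> \<theta>1 q g n t v \<longleftrightarrow>
     \<bar>(\<Sum>j\<in>{1..t}. v (0, n, j)) - real t * mm\<bar> < \<delta> * real t \<and>
     \<bar>(\<Sum>i\<in>{1..Lf \<delta> t}. indq \<theta>1 (v (1, n, i))) - real (Lf \<delta> t) * q\<bar> < \<delta> * real (Lf \<delta> t) \<and>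
     \<bar>(\<Sum>i\<in>{1..Uf \<delta> t}. capg \<theta>1 (v (1, n, i))) - real (Uf \<delta> t) * g\<bar> < \<delta> * real (Uf \<delta> t) \<and>
     \<bar>(\<Sum>j\<in>{1..t}. v (2, n, j)) - real t * rr\<bar> < \<delta> * real t"

lemma good_implies:
  assumes \<omega>: "\<omega> \<in> space M" and good: "goodv \<delta> \<theta>1 q g n t (\<lambda>i. allvars D X R i \<omega>)"
    and d: "0 < \<delta>" "\<delta> < q" "q \<le> 1" and th: "0 \<le> \<theta>1"
    and rg: "(mm + \<delta>) * (g + \<delta>) \<le> rr - \<delta>" and g0: "0 \<le> g + \<delta>" and m1: "1 \<le> mm - \<delta>"
  shows "real t * ((mm - \<delta>) * (q - \<delta>)) - 1 < real (sfM (Dsum D n t \<omega>) (\<lambda>k. X n k \<omega>) (Rsum R n t \<omega>))"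
proof -
  define Dt where "Dt = Dsum D n t \<omega>"
  define L where "L = Lf \<delta> t"
  define U where "U = Uf \<delta> t"
  have g1: "\<bar>(\<Sum>j\<in>{1..t}. real (D n j \<omega>)) - real t * mm\<bar> < \<delta> * real t"
    and g2: "\<bar>(\<Sum>i\<in>{1..L}. (if \<theta>1 < X n i \<omega> then 1 else 0)) - real L * q\<bar> < \<delta> * real L"
    and g3: "\<bar>(\<Sum>i\<in>{1..U}. (if \<theta>1 < X n i \<omega> then X n i \<omega> else 0)) - real U * g\<bar> < \<delta> * real U"
    and g4: "\<bar>(\<Sum>j\<in>{1..t}. R n j \<omega>) - real t * rr\<bar> < \<delta> * real t"
    using good unfolding goodv_def L_def U_def allvars_simps indq_def capg_def by auto
  have Dtr: "real Dt = (\<Sum>j\<in>{1..t}. real (D n j \<omega>))" by (simp add: Dt_def Dsum_def)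
  have Dlow: "real t * (mm - \<delta>) < real Dt" using g1 Dtr by (simp add: algebra_simps abs_less_iff)
  have Dup: "real Dt < real t * (mm + \<delta>)" using g1 Dtr by (simp add: algebra_simps abs_less_iff)
  have LDt: "L \<le> Dt"
  proof -
    have "real_of_int \<lfloor>real t * (mm - \<delta>)\<rfloor> \<le> real t * (mm - \<delta>)" by (rule of_int_floor_le)
    then have "real_of_int \<lfloor>real t * (mm - \<delta>)\<rfloor> \<le> real Dt" using Dlow by linarith
    then show ?thesis unfolding L_def Lf_def by linarith
  qed
  have DtU: "Dt \<le> U"
  proof -
    have "int Dt \<le> \<lfloor>real t * (mm + \<delta>)\<rfloor>" using Dup by (simp add: le_floor_iff)
    then show ?thesis unfolding U_def Uf_def by linarith
  qed
  have Ule: "real U \<le> real t * (mm + \<delta>)"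
  proof -
    have "0 \<le> real t * (mm + \<delta>)" using m1 d by simp
    then show ?thesis unfolding U_def Uf_def by (simp add: of_nat_nat floor_le_iff)
  qed
  have Lge: "real t * (mm - \<delta>) - 1 \<le> real L"
  proof -
    have "0 \<le> real t * (mm - \<delta>)" using m1 by simp
    then have "real L = real_of_int \<lfloor>real t * (mm - \<delta>)\<rfloor>" unfolding L_def Lf_def by simp
    then show ?thesis by linarith
  qed
  define G where "G = {i\<in>{1..Dt}. \<theta>1 < X n i \<omega>}"
  define GL where "GL = {i\<in>{1..L}. \<theta>1 < X n i \<omega>}"
  have cardGL: "real (card GL) = (\<Sum>i\<in>{1..L}. (if \<theta>1 < X n i \<omega> then 1 else 0))"
  proof -
    have "(\<Sum>i\<in>GL. (1::real)) = (\<Sum>i\<in>{1..L}. (if \<theta>1 < X n i \<omega> then 1 else 0))"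
      unfolding GL_def by (rule sum.inter_filter) simp
    then show ?thesis by simp
  qed
  have GLG: "card GL \<le> card G" unfolding GL_def G_def using LDt by (intro card_mono) auto
  have Nlow: "real L * (q - \<delta>) < real (card G)"
  proof -
    have "real L * q - \<delta> * real L < real (card GL)" using g2 cardGL by (simp add: abs_less_iff)
    then show ?thesis using GLG by (simp add: algebra_simps)
  qed
  have qd: "0 < q - \<delta>" "q - \<delta> \<le> 1" using d by auto
  have bound: "real t * ((mm - \<delta>) * (q - \<delta>)) - 1 \<le> real L * (q - \<delta>)"
  proof -
    have "(real t * (mm - \<delta>) - 1) * (q - \<delta>) \<le> real L * (q - \<delta>)"
      using Lge qd by (intro mult_right_mono) auto
    moreover have "real t * ((mm - \<delta>) * (q - \<delta>)) - 1 \<le> (real t * (mm - \<delta>) - 1) * (q - \<delta>)"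
      using qd by (simp add: algebra_simps)
    ultimately show ?thesis by linarith
  qed
  have Lq0: "0 \<le> real L * (q - \<delta>)" using qd by simp
  have N1: "1 \<le> card G" using Nlow Lq0 by (cases "card G") auto
  have sumG: "(\<Sum>i\<in>G. X n i \<omega>) = (\<Sum>i\<in>{1..Dt}. (if \<theta>1 < X n i \<omega> then X n i \<omega> else 0))"
    unfolding G_def by (rule sum.inter_filter) simp
  also have "\<dots> \<le> (\<Sum>i\<in>{1..U}. (if \<theta>1 < X n i \<omega> then X n i \<omega> else 0))"
    using DtU by (intro sum_mono2) (auto simp: X_nonneg[OF \<omega>])
  also have "\<dots> < real U * g + \<delta> * real U" using g3 by (simp add: abs_less_iff)
  also have "\<dots> = real U * (g + \<delta>)" by (simp add: algebra_simps)
  also have "\<dots> \<le> real t * (mm + \<delta>) * (g + \<delta>)" using Ule g0 by (intro mult_right_mono) auto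
  also have "\<dots> \<le> real t * (rr - \<delta>)" using rg by (simp add: mult.assoc mult_left_mono)
  also have "\<dots> < (\<Sum>j\<in>{1..t}. R n j \<omega>)" using g4 by (simp add: algebra_simps abs_less_iff)
  also have "\<dots> = Rsum R n t \<omega>" by (simp add: Rsum_def)
  finally have SG: "(\<Sum>i\<in>G. X n i \<omega>) \<le> Rsum R n t \<omega>" by simp
  have "card G \<le> sfM Dt (\<lambda>k. X n k \<omega>) (Rsum R n t \<omega>)"
    using sfM_lower[OF th, of Dt "\<lambda>k. X n k \<omega>" "Rsum R n t \<omega>"] N1 SG unfolding G_def by simp
  then have "real (card G) \<le> real (sfM Dt (\<lambda>k. X n k \<omega>) (Rsum R n t \<omega>))" by simp
  then show ?thesis using Nlow bound unfolding Dt_def by linarith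
qed


lemma sum4_div: "a \<le> A/c \<Longrightarrow> b \<le> B/c \<Longrightarrow> e \<le> E/c \<Longrightarrow> f \<le> FF/c \<Longrightarrow> a+b+e+f \<le> (A+B+E+FF)/(c::real)"
  unfolding add_divide_distrib by argo

lemma cheb_level':
  fixes h :: "real \<Rightarrow> real"
  assumes c: "c \<in> {0,1,2}" and h[measurable]: "h \<in> borel_measurable borel"
    and sqi: "integrable M (\<lambda>\<omega>. (h (V c 0 1 \<omega>))^2)"
    and tk: "t \<le> k" "1 \<le> t" and eta: "0 < \<eta>"
  shows "prob {\<omega>\<in>space M. \<eta> * real k \<le> \<bar>(\<Sum>i\<in>{1..k}. h (V c n i \<omega>)) - real k * expectation (\<lambda>\<omega>. h (V c 0 1 \<omega>))\<bar>}
    \<le> (expectation (\<lambda>\<omega>. (h (V c 0 1 \<omega>))^2) - (expectation (\<lambda>\<omega>. h (V c 0 1 \<omega>)))^2) / (\<eta>^2 * real t)"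
proof -
  have "prob {\<omega>\<in>space M. \<eta> * real k \<le> \<bar>(\<Sum>i\<in>{1..k}. h (V c n i \<omega>)) - real k * expectation (\<lambda>\<omega>. h (V c 0 1 \<omega>))\<bar>}
    \<le> (expectation (\<lambda>\<omega>. (h (V c 0 1 \<omega>))^2) - (expectation (\<lambda>\<omega>. h (V c 0 1 \<omega>)))^2) / (\<eta>^2 * real k)"
    using tk by (intro cheb_level[OF c h sqi _ _ _ _ eta]) auto
  also have "\<dots> \<le> (expectation (\<lambda>\<omega>. (h (V c 0 1 \<omega>))^2) - (expectation (\<lambda>\<omega>. h (V c 0 1 \<omega>)))^2) / (\<eta>^2 * real t)"
  proof (rule divide_left_mono)
    show "0 \<le> expectation (\<lambda>\<omega>. (h (V c 0 1 \<omega>))^2) - (expectation (\<lambda>\<omega>. h (V c 0 1 \<omega>)))^2"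
      by (rule var_nonneg) (use sqi in auto)
    show "\<eta>^2 * real t \<le> \<eta>^2 * real k" using tk by (intro mult_left_mono) auto
    show "0 < \<eta>^2 * real k * (\<eta>^2 * real t)" using tk eta by simp
  qed
  finally show ?thesis .
qed

definition "qq \<theta>1 = expectation (\<lambda>\<omega>. indq \<theta>1 (X 0 1 \<omega>))"
definition "gq \<theta>1 = expectation (\<lambda>\<omega>. capg \<theta>1 (X 0 1 \<omega>))"
definition "CC \<delta> \<theta>1 =
  ((expectation (\<lambda>\<omega>. (real (D 0 1 \<omega>))^2) - mm^2)
   + (expectation (\<lambda>\<omega>. (indq \<theta>1 (X 0 1 \<omega>))^2) - (qq \<theta>1)^2)
   + (expectation (\<lambda>\<omega>. (capg \<theta>1 (X 0 1 \<omega>))^2) - (gq \<theta>1)^2)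
   + (expectation (\<lambda>\<omega>. (R 0 1 \<omega>)^2) - rr^2)) / \<delta>^2"

lemma bad_bound:
  assumes d: "0 < \<delta>" "1 \<le> mm - \<delta>" and t: "1 \<le> t"
  shows "prob {\<omega>\<in>space M. \<not> goodv \<delta> \<theta>1 (qq \<theta>1) (gq \<theta>1) n t (\<lambda>i. allvars D X R i \<omega>)} \<le> CC \<delta> \<theta>1 / real t"
proof -
  define L where "L = Lf \<delta> t"
  define U where "U = Uf \<delta> t"
  have tL: "t \<le> L"
  proof -
    have "real t \<le> real t * (mm - \<delta>)" using d by (simp add: mult_le_cancel_left1)
    then have "int t \<le> \<lfloor>real t * (mm - \<delta>)\<rfloor>" by (simp add: le_floor_iff)
    then show ?thesis unfolding L_def Lf_def by linarith
  qed
  have tU: "t \<le> U"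
  proof -
    have "real t \<le> real t * (mm + \<delta>)" using d by (simp add: mult_le_cancel_left1)
    then have "int t \<le> \<lfloor>real t * (mm + \<delta>)\<rfloor>" by (simp add: le_floor_iff)
    then show ?thesis unfolding U_def Uf_def by linarith
  qed
  have hqm: "indq \<theta>1 \<in> borel_measurable borel" by measurable
  have hgm: "capg \<theta>1 \<in> borel_measurable borel" by measurable
  have idm: "(\<lambda>x::real. x) \<in> borel_measurable borel" by simp
  define B1 where "B1 = {\<omega>\<in>space M. \<delta> * real t \<le> \<bar>(\<Sum>i\<in>{1..t}. V 0 n i \<omega>) - real t * expectation (\<lambda>\<omega>. V 0 0 1 \<omega>)\<bar>}"
  define B2 where "B2 = {\<omega>\<in>space M. \<delta> * real L \<le> \<bar>(\<Sum>i\<in>{1..L}. indq \<theta>1 (V 1 n i \<omega>)) - real L * expectation (\<lambda>\<omega>. indq \<theta>1 (V 1 0 1 \<omega>))\<bar>}"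
  define B3 where "B3 = {\<omega>\<in>space M. \<delta> * real U \<le> \<bar>(\<Sum>i\<in>{1..U}. capg \<theta>1 (V 1 n i \<omega>)) - real U * expectation (\<lambda>\<omega>. capg \<theta>1 (V 1 0 1 \<omega>))\<bar>}"
  define B4 where "B4 = {\<omega>\<in>space M. \<delta> * real t \<le> \<bar>(\<Sum>i\<in>{1..t}. V 2 n i \<omega>) - real t * expectation (\<lambda>\<omega>. V 2 0 1 \<omega>)\<bar>}"
  have sets: "B1 \<in> sets M" "B2 \<in> sets M" "B3 \<in> sets M" "B4 \<in> sets M"
    unfolding B1_def B2_def B3_def B4_def by measurable
  have e0: "expectation (\<lambda>\<omega>. V 0 0 1 \<omega>) = mm" by (simp only: allvars_simps)
  have e2: "expectation (\<lambda>\<omega>. V 2 0 1 \<omega>) = rr" by (simp only: allvars_simps)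
  have e1q: "expectation (\<lambda>\<omega>. indq \<theta>1 (V 1 0 1 \<omega>)) = qq \<theta>1" unfolding qq_def by (simp only: allvars_simps)
  have e1g: "expectation (\<lambda>\<omega>. capg \<theta>1 (V 1 0 1 \<omega>)) = gq \<theta>1" unfolding gq_def by (simp only: allvars_simps)
  have sub: "{\<omega>\<in>space M. \<not> goodv \<delta> \<theta>1 (qq \<theta>1) (gq \<theta>1) n t (\<lambda>i. allvars D X R i \<omega>)} \<subseteq> B1 \<union> B2 \<union> B3 \<union> B4"
    unfolding goodv_def B1_def B2_def B3_def B4_def e0 e2 e1q e1g L_def U_def
    by (auto simp: not_less)
  have s0: "integrable M (\<lambda>\<omega>. (V 0 0 1 \<omega>)^2)" using D_var by (simp only: allvars_simps)
  have s2: "integrable M (\<lambda>\<omega>. (V 2 0 1 \<omega>)^2)" using R_var by (simp only: allvars_simps)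
  have s1q: "integrable M (\<lambda>\<omega>. (indq \<theta>1 (V 1 0 1 \<omega>))^2)"
    by (rule Bochner_Integration.integrable_bound[of _ "\<lambda>_. 1::real"]) (auto simp: indq_def)
  have s1g: "integrable M (\<lambda>\<omega>. (capg \<theta>1 (V 1 0 1 \<omega>))^2)"
    by (rule Bochner_Integration.integrable_bound[OF X_var]) (auto simp: capg_def V_simps)
  have p1: "prob B1 \<le> (expectation (\<lambda>\<omega>. (real (D 0 1 \<omega>))^2) - mm^2) / (\<delta>^2 * real t)"
    using cheb_level'[OF _ idm s0 order_refl t d(1), of n] unfolding B1_def e0 by (simp only: allvars_simps) simp
  have p4: "prob B4 \<le> (expectation (\<lambda>\<omega>. (R 0 1 \<omega>)^2) - rr^2) / (\<delta>^2 * real t)"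
    using cheb_level'[OF _ idm s2 order_refl t d(1), of n] unfolding B4_def e2 by (simp only: allvars_simps) simp
  have p2: "prob B2 \<le> (expectation (\<lambda>\<omega>. (indq \<theta>1 (X 0 1 \<omega>))^2) - (qq \<theta>1)^2) / (\<delta>^2 * real t)"
    using cheb_level'[OF _ hqm s1q tL t d(1), of n] unfolding B2_def e1q
    by (simp only: allvars_simps) simp
  have p3: "prob B3 \<le> (expectation (\<lambda>\<omega>. (capg \<theta>1 (X 0 1 \<omega>))^2) - (gq \<theta>1)^2) / (\<delta>^2 * real t)"
    using cheb_level'[OF _ hgm s1g tU t d(1), of n] unfolding B3_def e1g
    by (simp only: allvars_simps) simp
  have "prob {\<omega>\<in>space M. \<not> goodv \<delta> \<theta>1 (qq \<theta>1) (gq \<theta>1) n t (\<lambda>i. allvars D X R i \<omega>)} \<le> prob (B1 \<union> B2 \<union> B3 \<union> B4)"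
    using sub sets by (intro finite_measure_mono) auto
  also have "\<dots> \<le> prob B1 + prob B2 + prob B3 + prob B4"
  proof -
    have "prob (B1 \<union> B2 \<union> B3 \<union> B4) \<le> prob (B1 \<union> B2 \<union> B3) + prob B4"
      using sets by (intro measure_Un_le) auto
    moreover have "prob (B1 \<union> B2 \<union> B3) \<le> prob (B1 \<union> B2) + prob B3"
      using sets by (intro measure_Un_le) auto
    moreover have "prob (B1 \<union> B2) \<le> prob B1 + prob B2"
      using sets by (intro measure_Un_le) auto
    ultimately show ?thesis by linarith
  qed
  also have "\<dots> \<le> CC \<delta> \<theta>1 / real t"
    unfolding CC_def divide_divide_eq_left by (rule sum4_div[OF p1 p2 p3 p4])
  finally show ?thesis .
qed

end

lemma Dsum_meas:
  assumes "\<And>k. D n k \<in> measurable N (count_space UNIV)"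
  shows "Dsum D n t \<in> measurable N (count_space UNIV)"
proof (induction t)
  case 0
  then show ?case by (simp add: Dsum_def)
next
  case (Suc t)
  have eq: "Dsum D n (Suc t) = (\<lambda>\<omega>. (\<lambda>i \<omega>. i + D n (Suc t) \<omega>) (Dsum D n t \<omega>) \<omega>)"
    by (auto simp: Dsum_def)
  show ?case unfolding eq
  proof (rule measurable_compose_countable[OF _ Suc])
    fix i :: nat
    show "(\<lambda>\<omega>. i + D n (Suc t) \<omega>) \<in> measurable N (count_space UNIV)"
      using measurable_compose[OF assms[of "Suc t"], of "\<lambda>x. i + x" "count_space UNIV"] by simp
  qed
qed

lemma Rsum_meas:
  assumes "\<And>k. R n k \<in> borel_measurable N"
  shows "Rsum R n t \<in> borel_measurable N"
  unfolding Rsum_def using assms by measurable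

lemma sfS_meas:
  assumes D: "\<And>n k. D n k \<in> measurable N (count_space UNIV)"
    and X: "\<And>n k. X n k \<in> borel_measurable N"
    and R: "\<And>n k. R n k \<in> borel_measurable N"
  shows "sfS D X R n \<in> measurable N (count_space UNIV)"
proof (induction n)
  case 0
  then show ?case by simp
next
  case (Suc n)
  have eq: "sfS D X R (Suc n) = (\<lambda>\<omega>. (\<lambda>t \<omega>. sfM (Dsum D n t \<omega>) (\<lambda>k. X n k \<omega>) (Rsum R n t \<omega>)) (sfS D X R n \<omega>) \<omega>)"
    by auto
  show ?case unfolding eq
  proof (rule measurable_compose_countable[OF _ Suc])
    fix t :: nat
    show "(\<lambda>\<omega>. sfM (Dsum D n t \<omega>) (\<lambda>k. X n k \<omega>) (Rsum R n t \<omega>)) \<in> measurable N (count_space UNIV)"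
    proof (rule measurable_compose_countable[where f="\<lambda>u \<omega>. sfM u (\<lambda>k. X n k \<omega>) (Rsum R n t \<omega>)", OF _ Dsum_meas[OF D]])
      fix u
      show "(\<lambda>\<omega>. sfM u (\<lambda>k. X n k \<omega>) (Rsum R n t \<omega>)) \<in> measurable N (count_space UNIV)"
        by (rule sfM_fixed_meas[OF X Rsum_meas[OF R]])
    qed
  qed
qed

lemma sfM_cong:
  assumes "\<And>k. 1 \<le> k \<Longrightarrow> k \<le> t \<Longrightarrow> x k = y k"
  shows "sfM t x s = sfM t y s"
proof -
  have "map x [1..<t+1] = map y [1..<t+1]" using assms by (intro map_cong) auto
  then have "sfsorted t x = sfsorted t y" unfolding sfsorted_def by (simp only:)
  then show ?thesis by (simp add: sfM_def)
qed

lemma sfS_cong: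
  assumes "\<And>l k. l < n \<Longrightarrow> 1 \<le> k \<Longrightarrow> D l k \<omega> = D2 l k \<omega>2"
    and "\<And>l k. l < n \<Longrightarrow> 1 \<le> k \<Longrightarrow> X l k \<omega> = X2 l k \<omega>2"
    and "\<And>l k. l < n \<Longrightarrow> 1 \<le> k \<Longrightarrow> R l k \<omega> = R2 l k \<omega>2"
  shows "sfS D X R n \<omega> = sfS D2 X2 R2 n \<omega>2"
  using assms
proof (induction n)
  case 0
  then show ?case by simp
next
  case (Suc n)
  have IH: "sfS D X R n \<omega> = sfS D2 X2 R2 n \<omega>2" using Suc by auto
  define t where "t = sfS D X R n \<omega>"
  have "Dsum D n t \<omega> = Dsum D2 n t \<omega>2" unfolding Dsum_def using Suc.prems(1) by (intro sum.cong) auto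
  moreover have "Rsum R n t \<omega> = Rsum R2 n t \<omega>2" unfolding Rsum_def using Suc.prems(3) by (intro sum.cong) auto
  moreover have "sfM u (\<lambda>k. X n k \<omega>) s = sfM u (\<lambda>k. X2 n k \<omega>2) s" for u s
    using Suc.prems(2) by (intro sfM_cong) auto
  ultimately show ?case using IH by (simp add: t_def[symmetric])
qed

definition Kset :: "nat \<Rightarrow> (nat \<times> nat \<times> nat) set" where
  "Kset n = {i \<in> allidx. fst (snd i) < n}"
definition Lset :: "nat \<Rightarrow> (nat \<times> nat \<times> nat) set" where
  "Lset n = {i \<in> allidx. fst (snd i) = n}"

definition Dv :: "nat \<Rightarrow> nat \<Rightarrow> (nat \<times> nat \<times> nat \<Rightarrow> real) \<Rightarrow> nat" where
  "Dv l k v = nat \<lfloor>v (0, l, k)\<rfloor>"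
definition Xv :: "nat \<Rightarrow> nat \<Rightarrow> (nat \<times> nat \<times> nat \<Rightarrow> real) \<Rightarrow> real" where
  "Xv l k v = v (1, l, k)"
definition Rv :: "nat \<Rightarrow> nat \<Rightarrow> (nat \<times> nat \<times> nat \<Rightarrow> real) \<Rightarrow> real" where
  "Rv l k v = v (2, l, k)"

lemma coord_meas[measurable]: "(\<lambda>v. v i) \<in> borel_measurable (PiM K (\<lambda>_. borel))"
proof (cases "i \<in> K")
  case True
  then show ?thesis by measurable
next
  case False
  have "(\<lambda>v. undefined) \<in> borel_measurable (PiM K (\<lambda>_. borel))" by simp
  then show ?thesis
    by (rule measurable_cong[THEN iffD1, rotated]) (use False in \<open>auto simp: space_PiM PiE_def extensional_def\<close>)
qed

lemma Dv_meas: "Dv l k \<in> measurable (PiM K (\<lambda>_. borel)) (count_space UNIV)"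
  unfolding Dv_def by measurable
lemma Xv_meas: "Xv l k \<in> borel_measurable (PiM K (\<lambda>_. borel))"
  unfolding Xv_def by measurable
lemma Rv_meas: "Rv l k \<in> borel_measurable (PiM K (\<lambda>_. borel))"
  unfolding Rv_def by measurable

lemma sfSv_meas: "sfS Dv Xv Rv n \<in> measurable (PiM K (\<lambda>_. borel)) (count_space UNIV)"
  by (rule sfS_meas[OF Dv_meas Xv_meas Rv_meas])

lemma sfS_restrict:
  assumes "n \<le> n'"
  shows "sfS D X R n \<omega> = sfS Dv Xv Rv n (restrict (\<lambda>i. allvars D X R i \<omega>) (Kset n'))"
  by (rule sfS_cong) (use assms in \<open>auto simp: Dv_def Xv_def Rv_def allvars_def Kset_def allidx_def\<close>)

context sfsetting begin

abbreviation "S \<equiv> sfS D X R"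

lemma S_meas[measurable]: "S n \<in> measurable M (count_space UNIV)"
  by (rule sfS_meas[OF D_meas X_meas R_meas])

lemma goodv_restrict:
  "goodv \<delta> \<theta>1 q g n t (restrict v (Lset n)) = goodv \<delta> \<theta>1 q g n t v"
proof -
  have in0: "(0, n, j) \<in> Lset n" "(1, n, j) \<in> Lset n" "(2, n, j) \<in> Lset n" if "j \<in> {1..k}" for j k
    using that by (auto simp: Lset_def allidx_def)
  have s1: "(\<Sum>j\<in>{1..t}. restrict v (Lset n) (0, n, j)) = (\<Sum>j\<in>{1..t}. v (0, n, j))"
    using in0 by (intro sum.cong) auto
  have s2: "(\<Sum>j\<in>{1..k}. indq \<theta>1 (restrict v (Lset n) (1, n, j))) = (\<Sum>j\<in>{1..k}. indq \<theta>1 (v (1, n, j)))" for k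
    using in0 by (intro sum.cong) auto
  have s3: "(\<Sum>j\<in>{1..k}. capg \<theta>1 (restrict v (Lset n) (1, n, j))) = (\<Sum>j\<in>{1..k}. capg \<theta>1 (v (1, n, j)))" for k
    using in0 by (intro sum.cong) auto
  have s4: "(\<Sum>j\<in>{1..t}. restrict v (Lset n) (2, n, j)) = (\<Sum>j\<in>{1..t}. v (2, n, j))"
    using in0 by (intro sum.cong) auto
  show ?thesis unfolding goodv_def s1 s2 s3 s4 ..
qed

lemma goodv_meas:
  "{v \<in> space (PiM K (\<lambda>_. borel)). \<not> goodv \<delta> \<theta>1 q g n t v} \<in> sets (PiM K (\<lambda>_. borel))"
  unfolding goodv_def by measurable

lemma indep_step:
  assumes "n0 \<le> n"
  shows "prob {\<omega>\<in>space M. S n0 \<omega> = j0 \<and> S n \<omega> = t \<and> \<not> goodv \<delta> \<theta>1 q g n t (\<lambda>i. allvars D X R i \<omega>)}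
    = prob {\<omega>\<in>space M. S n0 \<omega> = j0 \<and> S n \<omega> = t} * prob {\<omega>\<in>space M. \<not> goodv \<delta> \<theta>1 q g n t (\<lambda>i. allvars D X R i \<omega>)}"
proof -
  define VK where "VK \<omega> = restrict (\<lambda>i. allvars D X R i \<omega>) (Kset n)" for \<omega>
  define VL where "VL \<omega> = restrict (\<lambda>i. allvars D X R i \<omega>) (Lset n)" for \<omega>
  have iv: "indep_var (PiM (Kset n) (\<lambda>_. borel)) VK (PiM (Lset n) (\<lambda>_. borel)) VL"
    unfolding VK_def VL_def by (rule indep_var_restrict[OF indep]) (auto simp: Kset_def Lset_def)
  define Xa where "Xa = {v \<in> space (PiM (Kset n) (\<lambda>_. borel)). sfS Dv Xv Rv n0 v = j0 \<and> sfS Dv Xv Rv n v = t}"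
  define Xb where "Xb = {v \<in> space (PiM (Lset n) (\<lambda>_. borel)). \<not> goodv \<delta> \<theta>1 q g n t v}"
  have Xam: "Xa \<in> sets (PiM (Kset n) (\<lambda>_. borel))"
  proof -
    have [measurable]: "sfS Dv Xv Rv m \<in> measurable (PiM (Kset n) (\<lambda>_. borel)) (count_space UNIV)" for m
      by (rule sfSv_meas)
    show ?thesis unfolding Xa_def by measurable
  qed
  have Xbm: "Xb \<in> sets (PiM (Lset n) (\<lambda>_. borel))" unfolding Xb_def by (rule goodv_meas)
  have VKsp: "VK \<omega> \<in> space (PiM (Kset n) (\<lambda>_. borel))" for \<omega>
    unfolding VK_def by (auto simp: space_PiM)
  have VLsp: "VL \<omega> \<in> space (PiM (Lset n) (\<lambda>_. borel))" for \<omega>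
    unfolding VL_def by (auto simp: space_PiM)
  have pa: "VK -` Xa \<inter> space M = {\<omega>\<in>space M. S n0 \<omega> = j0 \<and> S n \<omega> = t}"
    using VKsp assms unfolding Xa_def VK_def by (auto simp: sfS_restrict[symmetric])
  have pb: "VL -` Xb \<inter> space M = {\<omega>\<in>space M. \<not> goodv \<delta> \<theta>1 q g n t (\<lambda>i. allvars D X R i \<omega>)}"
    using VLsp unfolding Xb_def VL_def by (auto simp: goodv_restrict)
  have pab: "(\<lambda>x. (VK x, VL x)) -` (Xa \<times> Xb) \<inter> space M =
      {\<omega>\<in>space M. S n0 \<omega> = j0 \<and> S n \<omega> = t \<and> \<not> goodv \<delta> \<theta>1 q g n t (\<lambda>i. allvars D X R i \<omega>)}"
    using pa pb by blast
  show ?thesis using indep_varD[OF iv Xam Xbm] unfolding pa pb pab .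
qed


lemma bad_sets[measurable]: "{\<omega>\<in>space M. \<not> goodv \<delta> \<theta>1 q g n t (\<lambda>i. allvars D X R i \<omega>)} \<in> sets M"
  unfolding goodv_def by measurable

lemma exp_indq: "expectation (\<lambda>\<omega>. indq c (X 0 1 \<omega>)) = prob {\<omega>\<in>space M. c < X 0 1 \<omega>}"
proof -
  have "expectation (\<lambda>\<omega>. indq c (X 0 1 \<omega>)) = expectation (indicator {\<omega>\<in>space M. c < X 0 1 \<omega>})"
    by (intro Bochner_Integration.integral_cong) (auto simp: indq_def indicator_def)
  also have "\<dots> = prob ({\<omega>\<in>space M. c < X 0 1 \<omega>} \<inter> space M)"
    by (rule Bochner_Integration.integral_indicator)
  also have "{\<omega>\<in>space M. c < X 0 1 \<omega>} \<inter> space M = {\<omega>\<in>space M. c < X 0 1 \<omega>}" by auto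
  finally show ?thesis .
qed

lemma params:
  obtains \<theta>1 \<delta> where "0 < \<theta>1" "0 < \<delta>" "\<delta> < qq \<theta>1" "qq \<theta>1 \<le> 1"
    "(mm + \<delta>) * (gq \<theta>1 + \<delta>) \<le> rr - \<delta>" "0 \<le> gq \<theta>1 + \<delta>" "1 \<le> mm - \<delta>"
    "1 < (mm - \<delta>) * (qq \<theta>1 - \<delta>)"
proof -
  obtain \<theta>1 where t1: "0 < \<theta>1" "mm * (1 - F \<theta>1) > 1"
    "mm * expectation (\<lambda>\<omega>. if \<theta>1 < X 0 1 \<omega> then X 0 1 \<omega> else 0) < rr"
    by (rule theta1)
  define q where "q = qq \<theta>1"
  define g where "g = gq \<theta>1"
  have qF: "q = 1 - F \<theta>1" unfolding q_def qq_def exp_indq F_compl ..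
  have gE: "g = expectation (\<lambda>\<omega>. if \<theta>1 < X 0 1 \<omega> then X 0 1 \<omega> else 0)"
    unfolding g_def gq_def capg_def ..
  have m1: "1 < mm" by (rule m_gt1)
  have mq: "1 < mm * q" using t1(2) qF by simp
  have mg: "mm * g < rr" using t1(3) gE by simp
  have q1: "q \<le> 1" using qF F_ge0[of \<theta>1] by simp
  have qpos: "0 < q"
  proof (rule ccontr)
    assume "\<not> 0 < q"
    then have "mm * q \<le> 0" using m1 by (simp add: mult_nonneg_nonpos)
    with mq show False by simp
  qed
  have g0: "0 \<le> g" unfolding gE
    by (intro integral_nonneg_AE AE_I2) (simp add: X_nonneg)
  have lim_id: "((\<lambda>\<delta>::real. \<delta>) \<longlongrightarrow> 0) (at_right 0)" by (rule tendsto_ident_at)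
  have ev1: "eventually (\<lambda>\<delta>::real. 0 < \<delta>) (at_right 0)" by (rule eventually_at_right_less)
  have ev2: "eventually (\<lambda>\<delta>::real. \<delta> < q) (at_right 0)" using order_tendstoD(2)[OF lim_id qpos] .
  have ev3: "eventually (\<lambda>\<delta>::real. \<delta> < mm - 1) (at_right 0)" using order_tendstoD(2)[OF lim_id, of "mm - 1"] m1 by simp
  have l4: "((\<lambda>\<delta>. (mm - \<delta>) * (q - \<delta>)) \<longlongrightarrow> (mm - 0) * (q - 0)) (at_right 0)"
    by (intro tendsto_mult tendsto_diff tendsto_const lim_id)
  have ev4: "eventually (\<lambda>\<delta>::real. 1 < (mm - \<delta>) * (q - \<delta>)) (at_right 0)"
    using order_tendstoD(1)[OF l4, of 1] mq by simp
  have l5: "((\<lambda>\<delta>. (mm + \<delta>) * (g + \<delta>) + \<delta>) \<longlongrightarrow> (mm + 0) * (g + 0) + 0) (at_right 0)"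
    by (intro tendsto_mult tendsto_add tendsto_const lim_id)
  have ev5: "eventually (\<lambda>\<delta>::real. (mm + \<delta>) * (g + \<delta>) + \<delta> < rr) (at_right 0)"
    using order_tendstoD(2)[OF l5, of rr] mg by simp
  have "eventually (\<lambda>\<delta>::real. 0 < \<delta> \<and> \<delta> < q \<and> \<delta> < mm - 1 \<and> 1 < (mm - \<delta>) * (q - \<delta>) \<and> (mm + \<delta>) * (g + \<delta>) + \<delta> < rr) (at_right 0)"
    using ev1 ev2 ev3 ev4 ev5 by (intro eventually_conj)
  then obtain \<delta> where d: "0 < \<delta>" "\<delta> < q" "\<delta> < mm - 1" "1 < (mm - \<delta>) * (q - \<delta>)" "(mm + \<delta>) * (g + \<delta>) + \<delta> < rr"
    using eventually_happens[of _ "at_right (0::real)"] by auto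
  show ?thesis
  proof (rule that[of \<theta>1 \<delta>])
    show "0 < \<theta>1" by (rule t1(1))
    show "0 < \<delta>" by (rule d(1))
    show "\<delta> < qq \<theta>1" using d(2) by (simp add: q_def)
    show "qq \<theta>1 \<le> 1" using q1 by (simp add: q_def)
    show "(mm + \<delta>) * (gq \<theta>1 + \<delta>) \<le> rr - \<delta>" using d(5) by (simp add: g_def)
    show "0 \<le> gq \<theta>1 + \<delta>" using g0 d(1) by (simp add: g_def)
    show "1 \<le> mm - \<delta>" using d(3) by simp
    show "1 < (mm - \<delta>) * (qq \<theta>1 - \<delta>)" using d(4) by (simp add: q_def)
  qed
qed


lemma survival:
  assumes A3: "\<And>j. j \<ge> 1 \<Longrightarrow> \<exists>n. measure M {\<omega> \<in> space M. S n \<omega> = j} > 0"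
  shows "measure M {\<omega> \<in> space M. (\<lambda>n. real (S n \<omega>)) \<longlonglongrightarrow> 0} < 1"
proof -
  obtain \<theta>1 \<delta> where pr: "0 < \<theta>1" "0 < \<delta>" "\<delta> < qq \<theta>1" "qq \<theta>1 \<le> 1"
    "(mm + \<delta>) * (gq \<theta>1 + \<delta>) \<le> rr - \<delta>" "0 \<le> gq \<theta>1 + \<delta>" "1 \<le> mm - \<delta>"
    "1 < (mm - \<delta>) * (qq \<theta>1 - \<delta>)"
    by (rule params)
  define q where "q = qq \<theta>1"
  define g where "g = gq \<theta>1"
  define good where "good n t \<omega> = goodv \<delta> \<theta>1 q g n t (\<lambda>i. allvars D X R i \<omega>)" for n t \<omega>
  define \<rho> where "\<rho> = (mm - \<delta>) * (q - \<delta>)"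
  have \<rho>1: "1 < \<rho>" using pr(8) by (simp add: \<rho>_def q_def)
  define \<kappa> where "\<kappa> = (1 + \<rho>) / 2"
  have \<kappa>1: "1 < \<kappa>" using \<rho>1 by (simp add: \<kappa>_def)
  define T0 where "T0 = nat \<lceil>2 / (\<rho> - 1)\<rceil> + 1"
  have T01: "1 \<le> T0" by (simp add: T0_def)
  have step: "real t * \<kappa> \<le> real (sfM (Dsum D n t \<omega>) (\<lambda>k. X n k \<omega>) (Rsum R n t \<omega>))"
    if \<omega>: "\<omega> \<in> space M" and t: "T0 \<le> t" and gd: "good n t \<omega>" for n t \<omega>
  proof -
    have "real t * \<rho> - 1 < real (sfM (Dsum D n t \<omega>) (\<lambda>k. X n k \<omega>) (Rsum R n t \<omega>))"
      unfolding \<rho>_def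
      by (rule good_implies[OF \<omega> gd[unfolded good_def]]) (use pr in \<open>simp_all add: q_def g_def\<close>)
    moreover have "real t * \<kappa> \<le> real t * \<rho> - 1"
    proof -
      have "2 / (\<rho> - 1) \<le> real t"
      proof -
        have "2 / (\<rho> - 1) \<le> real (nat \<lceil>2 / (\<rho> - 1)\<rceil>)" by linarith
        also have "\<dots> \<le> real t"
        proof -
          have "nat \<lceil>2 / (\<rho> - 1)\<rceil> \<le> t" using t unfolding T0_def by linarith
          then show ?thesis by (simp only: of_nat_le_iff)
        qed
        finally show ?thesis .
      qed
      then have h2: "2 \<le> real t * (\<rho> - 1)" using \<rho>1 by (simp add: field_simps)
      define x where "x = real t * \<rho>"
      have e1: "real t * (\<rho> - 1) = x - real t" by (simp add: x_def algebra_simps)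
      have e2: "real t * \<kappa> = (real t + x) / 2" by (simp add: x_def \<kappa>_def algebra_simps)
      have "2 \<le> x - real t" using h2 e1 by simp
      then have "(real t + x) / 2 \<le> x - 1" by argo
      then show ?thesis unfolding e2 x_def .
    qed
    ultimately show ?thesis by linarith
  qed
  define C where "C = CC \<delta> \<theta>1"
  have bad: "prob {\<omega>\<in>space M. \<not> good n t \<omega>} \<le> C / real t" if "1 \<le> t" for n t
    unfolding good_def C_def q_def g_def using bad_bound[OF pr(2) pr(7) that] .
  have C0: "0 \<le> C"
  proof -
    have b1: "prob {\<omega>\<in>space M. \<not> good 0 1 \<omega>} \<le> C / real (1::nat)" by (rule bad) simp
    have b0: "0 \<le> prob {\<omega>\<in>space M. \<not> good 0 1 \<omega>}" by (rule measure_nonneg)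
    have b1': "prob {\<omega>\<in>space M. \<not> good 0 1 \<omega>} \<le> C" using b1 by (simp only: of_nat_1 div_by_1)
    show ?thesis using b0 b1' by (rule order_trans)
  qed
  define j0 where "j0 = max T0 (nat \<lceil>C * \<kappa> / (\<kappa> - 1)\<rceil> + 1)"
  have j0T: "T0 \<le> j0" by (simp add: j0_def)
  have j01: "1 \<le> j0" using j0T T01 by simp
  have j0C: "C * \<kappa> / (\<kappa> - 1) < real j0"
  proof -
    have "C * \<kappa> / (\<kappa> - 1) \<le> real (nat \<lceil>C * \<kappa> / (\<kappa> - 1)\<rceil>)" by linarith
    also have "\<dots> < real (nat \<lceil>C * \<kappa> / (\<kappa> - 1)\<rceil> + 1)" by simp
    also have "\<dots> \<le> real j0" by (simp add: j0_def)
    finally show ?thesis .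
  qed
  obtain n0 where pH: "0 < prob {\<omega>\<in>space M. S n0 \<omega> = j0}" using A3[OF j01] by blast
  define H where "H = {\<omega>\<in>space M. S n0 \<omega> = j0}"
  define p where "p = prob H"
  have p0: "0 < p" using pH by (simp add: p_def H_def)
  define a where "a k = real j0 * \<kappa> ^ k" for k
  have a_ge: "real j0 \<le> a k" for k
  proof -
    have "1 \<le> \<kappa> ^ k" using \<kappa>1 by (simp add: one_le_power)
    then show ?thesis unfolding a_def using mult_left_mono[of 1 "\<kappa>^k" "real j0"] by simp
  qed
  have a_pos: "0 < a k" for k using a_ge[of k] j01 by linarith
  define A where "A k = {\<omega>\<in>space M. S n0 \<omega> = j0 \<and> a k \<le> real (S (n0 + k) \<omega>) \<and> real (S (n0 + Suc k) \<omega>) < a (Suc k)}" for k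
  have Asets: "A k \<in> sets M" for k unfolding A_def by measurable
  have Abound: "prob (A k) \<le> C / a k * p" for k
  proof -
    define n where "n = n0 + k"
    define Q where "Q t = {\<omega>\<in>space M. S n0 \<omega> = j0 \<and> S n \<omega> = t}" for t
    define W where "W t = {\<omega>\<in>space M. S n0 \<omega> = j0 \<and> S n \<omega> = t \<and> a k \<le> real t \<and> \<not> good n t \<omega>}" for t
    have Qsets: "Q t \<in> sets M" for t unfolding Q_def by measurable
    have Wsets: "W t \<in> sets M" for t
    proof -
      have "W t = (if a k \<le> real t then {\<omega>\<in>space M. S n0 \<omega> = j0 \<and> S n \<omega> = t} \<inter> {\<omega>\<in>space M. \<not> good n t \<omega>} else {})"
        unfolding W_def by auto
      moreover have "{\<omega>\<in>space M. \<not> good n t \<omega>} \<in> sets M" unfolding good_def by (rule bad_sets)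
      ultimately show ?thesis by simp
    qed
    have sub: "A k \<subseteq> (\<Union>t. W t)"
    proof
      fix \<omega> assume \<omega>A: "\<omega> \<in> A k"
      define t where "t = S n \<omega>"
      have \<omega>: "\<omega> \<in> space M" and h0: "S n0 \<omega> = j0" and at: "a k \<le> real t"
        and lt: "real (S (Suc n) \<omega>) < a (Suc k)"
        using \<omega>A by (auto simp: A_def t_def n_def)
      have "\<not> good n t \<omega>"
      proof
        assume gd: "good n t \<omega>"
        have tT: "T0 \<le> t" using at a_ge[of k] j0T by linarith
        have "real t * \<kappa> \<le> real (S (Suc n) \<omega>)"
          using step[OF \<omega> tT gd] by (simp add: t_def)
        moreover have "a (Suc k) \<le> real t * \<kappa>"
          using at \<kappa>1 by (simp add: a_def mult_right_mono mult.assoc[symmetric])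
        ultimately show False using lt by linarith
      qed
      then have "\<omega> \<in> W t" using \<omega> h0 at by (simp add: W_def t_def)
      then show "\<omega> \<in> (\<Union>t. W t)" by blast
    qed
    have Wle: "prob (W t) \<le> prob (Q t) * (C / a k)" for t
    proof (cases "a k \<le> real t")
      case True
      have t1: "1 \<le> t" using True a_ge[of k] j01 by linarith
      have "W t = {\<omega>\<in>space M. S n0 \<omega> = j0 \<and> S n \<omega> = t \<and> \<not> goodv \<delta> \<theta>1 q g n t (\<lambda>i. allvars D X R i \<omega>)}"
        using True unfolding W_def good_def by auto
      then have "prob (W t) = prob (Q t) * prob {\<omega>\<in>space M. \<not> good n t \<omega>}"
        unfolding Q_def good_def using indep_step[of n0 n] by (simp add: n_def)
      also have "\<dots> \<le> prob (Q t) * (C / real t)"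
        using bad[OF t1] by (intro mult_left_mono) auto
      also have "\<dots> \<le> prob (Q t) * (C / a k)"
        using True a_pos[of k] C0 by (intro mult_left_mono divide_left_mono) auto
      finally show ?thesis .
    next
      case False
      then have "W t = {}" unfolding W_def by auto
      then show ?thesis using C0 a_pos[of k] by simp
    qed
    have Qsum: "(\<lambda>t. prob (Q t)) sums p"
    proof -
      have "(\<lambda>t. prob (Q t)) sums prob (\<Union>t. Q t)"
        using Qsets by (intro finite_measure_UNION) (auto simp: disjoint_family_on_def Q_def)
      moreover have "(\<Union>t. Q t) = H" unfolding Q_def H_def by auto
      ultimately show ?thesis by (simp add: p_def)
    qed
    have sumQC: "(\<lambda>t. prob (Q t) * (C / a k)) sums (p * (C / a k))"
      by (rule sums_mult2[OF Qsum])
    have Wsumm: "summable (\<lambda>t. prob (W t))"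
    proof (rule summable_comparison_test[OF _ sums_summable[OF sumQC]])
      show "\<exists>N. \<forall>n\<ge>N. norm (prob (W n)) \<le> prob (Q n) * (C / a k)"
      proof (intro exI[of _ 0] allI impI)
        fix n :: nat
        have "norm (prob (W n)) = prob (W n)" by (simp only: real_norm_def abs_of_nonneg[OF measure_nonneg])
        then show "norm (prob (W n)) \<le> prob (Q n) * (C / a k)" using Wle[of n] by (simp only:)
      qed
    qed
    have "prob (A k) \<le> prob (\<Union>t. W t)"
      using sub Wsets by (intro finite_measure_mono) auto
    also have "\<dots> \<le> (\<Sum>t. prob (W t))"
      using Wsets Wsumm by (intro finite_measure_subadditive_countably) auto
    also have "\<dots> \<le> (\<Sum>t. prob (Q t) * (C / a k))"
      using Wsumm sums_summable[OF sumQC] Wle by (intro suminf_le) auto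
    also have "\<dots> = p * (C / a k)" using sumQC by (simp add: sums_iff)
    finally show ?thesis by (simp add: mult.commute)
  qed
  define r where "r = 1 / \<kappa>"
  have r01: "0 < r" "r < 1" using \<kappa>1 by (auto simp: r_def)
  have Aeq: "C / a k * p = (p * C / real j0) * r ^ k" for k
    unfolding a_def r_def by (simp add: power_one_over field_simps)
  have geo: "(\<lambda>k. (p * C / real j0) * r ^ k) sums ((p * C / real j0) * (1 / (1 - r)))"
    by (rule sums_mult[OF geometric_sums]) (use r01 in simp)
  have Abound': "prob (A k) \<le> (p * C / real j0) * r ^ k" for k using Abound[of k] unfolding Aeq .
  have Asumm: "summable (\<lambda>k. prob (A k))"
  proof (rule summable_comparison_test[OF _ sums_summable[OF geo]])
    show "\<exists>N. \<forall>n\<ge>N. norm (prob (A n)) \<le> (p * C / real j0) * r ^ n"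
    proof (intro exI[of _ 0] allI impI)
      fix n :: nat
      have "norm (prob (A n)) = prob (A n)" by (simp only: real_norm_def abs_of_nonneg[OF measure_nonneg])
      then show "norm (prob (A n)) \<le> (p * C / real j0) * r ^ n" using Abound'[of n] by (simp only:)
    qed
  qed
  have Asum_le: "(\<Sum>k. prob (A k)) \<le> (p * C / real j0) * (1 / (1 - r))"
  proof -
    have "(\<Sum>k. prob (A k)) \<le> (\<Sum>k. (p * C / real j0) * r ^ k)"
      using Asumm sums_summable[OF geo] Abound' by (intro suminf_le) auto
    also have "\<dots> = (p * C / real j0) * (1 / (1 - r))" using geo by (simp add: sums_iff)
    finally show ?thesis .
  qed
  have lt_p: "(p * C / real j0) * (1 / (1 - r)) < p"
  proof -
    have "1 / (1 - r) = \<kappa> / (\<kappa> - 1)" unfolding r_def using \<kappa>1 by (simp add: field_simps)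
    then have "(p * C / real j0) * (1 / (1 - r)) = p * (C * \<kappa> / (\<kappa> - 1) / real j0)" by (simp add: mult_ac)
    also have "\<dots> < p * 1"
    proof (rule mult_strict_left_mono[OF _ p0])
      have "0 < real j0" using j01 by simp
      then show "C * \<kappa> / (\<kappa> - 1) / real j0 < 1" using j0C by (simp only: divide_less_eq_1_pos)
    qed
    finally show ?thesis by simp
  qed
  define G where "G = {\<omega>\<in>space M. S n0 \<omega> = j0 \<and> (\<forall>k. a k \<le> real (S (n0 + k) \<omega>))}"
  have Gsets: "G \<in> sets M" unfolding G_def by measurable
  have Hsets: "H \<in> sets M" unfolding H_def by measurable
  have HG: "H - G \<subseteq> (\<Union>k. A k)"
  proof
    fix \<omega> assume \<omega>: "\<omega> \<in> H - G"
    then have sp: "\<omega> \<in> space M" and h0: "S n0 \<omega> = j0" by (auto simp: H_def)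
    then obtain k where k: "\<not> a k \<le> real (S (n0 + k) \<omega>)" using \<omega> by (auto simp: G_def)
    define k0 where "k0 = (LEAST k. \<not> a k \<le> real (S (n0 + k) \<omega>))"
    have k0: "\<not> a k0 \<le> real (S (n0 + k0) \<omega>)" unfolding k0_def using k by (rule LeastI)
    have k0min: "a i \<le> real (S (n0 + i) \<omega>)" if "i < k0" for i
      using not_less_Least[OF that[unfolded k0_def]] by simp
    have "k0 \<noteq> 0"
    proof
      assume "k0 = 0"
      then have "a k0 \<le> real (S (n0 + k0) \<omega>)" using h0 by (simp add: a_def)
      with k0 show False by simp
    qed
    then obtain k' where k': "k0 = Suc k'" by (cases k0) auto
    have "\<omega> \<in> A k'" using sp h0 k0min[of k'] k0 by (simp add: A_def k' not_le)
    then show "\<omega> \<in> (\<Union>k. A k)" by blast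
  qed
  have "prob (H - G) \<le> prob (\<Union>k. A k)"
    using HG Asets by (intro finite_measure_mono) auto
  also have "\<dots> \<le> (\<Sum>k. prob (A k))"
    using Asets Asumm by (intro finite_measure_subadditive_countably) auto
  finally have pHG: "prob (H - G) < p" using Asum_le lt_p by linarith
  have "p \<le> prob (G \<union> (H - G))"
    unfolding p_def using Hsets Gsets by (intro finite_measure_mono) auto
  also have "\<dots> \<le> prob G + prob (H - G)" using Gsets Hsets by (intro measure_Un_le) auto
  finally have PG: "0 < prob G" using pHG by linarith
  define E where "E = {\<omega> \<in> space M. (\<lambda>n. real (S n \<omega>)) \<longlonglongrightarrow> 0}"
  have disj: "E \<subseteq> space M - G"
  proof
    fix \<omega> assume "\<omega> \<in> E"
    then have sp: "\<omega> \<in> space M" and lim: "(\<lambda>n. real (S n \<omega>)) \<longlonglongrightarrow> 0" by (auto simp: E_def)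
    have "eventually (\<lambda>n. real (S n \<omega>) < 1) sequentially" by (rule order_tendstoD(2)[OF lim]) simp
    then obtain N where N: "\<And>n. N \<le> n \<Longrightarrow> real (S n \<omega>) < 1" by (auto simp: eventually_sequentially)
    have "\<omega> \<notin> G"
    proof
      assume "\<omega> \<in> G"
      then have "a N \<le> real (S (n0 + N) \<omega>)" by (auto simp: G_def)
      moreover have "real (S (n0 + N) \<omega>) < 1" by (rule N) simp
      moreover have "1 \<le> a N" using a_ge[of N] j01 by linarith
      ultimately show False by linarith
    qed
    then show "\<omega> \<in> space M - G" using sp by blast
  qed
  show ?thesis
  proof (cases "E \<in> sets M")
    case True
    have "prob E \<le> prob (space M - G)" using disj True Gsets by (intro finite_measure_mono) auto
    also have "\<dots> = 1 - prob G" using Gsets by (rule prob_compl)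
    finally show ?thesis using PG by (simp add: E_def)
  next
    case False
    then have "prob E = 0" by (simp add: measure_notin_sets)
    then show ?thesis by (simp add: E_def)
  qed
qed

end

theorem mainTheorem19:
  fixes M :: "'a measure"
    and D :: "nat \<Rightarrow> nat \<Rightarrow> 'a \<Rightarrow> nat"
    and X R :: "nat \<Rightarrow> nat \<Rightarrow> 'a \<Rightarrow> real"
    and \<theta> :: real
  assumes P: "prob_space M"
    and D_meas: "\<And>n k. D n k \<in> measurable M (count_space UNIV)"
    and X_meas: "\<And>n k. X n k \<in> borel_measurable M"
    and R_meas: "\<And>n k. R n k \<in> borel_measurable M"
    and indep: "prob_space.indep_vars M (\<lambda>_. borel) (allvars D X R) allidx"
    and D_id: "\<And>n k. k \<ge> 1 \<Longrightarrow>
        distr M (count_space UNIV) (D n k) = distr M (count_space UNIV) (D 0 1)"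
    and X_id: "\<And>n k. k \<ge> 1 \<Longrightarrow> distr M borel (X n k) = distr M borel (X 0 1)"
    and R_id: "\<And>n k. k \<ge> 1 \<Longrightarrow> distr M borel (R n k) = distr M borel (R 0 1)"
    and X_nonneg: "\<And>n k \<omega>. \<omega> \<in> space M \<Longrightarrow> X n k \<omega> \<ge> 0"
    and R_nonneg: "\<And>n k \<omega>. \<omega> \<in> space M \<Longrightarrow> R n k \<omega> \<ge> 0"
    and F_cont: "\<And>x. isCont (cdf (distr M borel (X 0 1))) x"
    \<comment> \<open>(A1) and (A4): finite means and finite variances; 1 < m, 0 < mu\<close>
    and D_int: "integrable M (\<lambda>\<omega>. real (D 0 1 \<omega>))"
    and X_int: "integrable M (X 0 1)"
    and R_int: "integrable M (R 0 1)"
    and D_var: "integrable M (\<lambda>\<omega>. (real (D 0 1 \<omega>))\<^sup>2)"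
    and X_var: "integrable M (\<lambda>\<omega>. (X 0 1 \<omega>)\<^sup>2)"
    and R_var: "integrable M (\<lambda>\<omega>. (R 0 1 \<omega>)\<^sup>2)"
    and m_gt1: "(\<integral>\<omega>. real (D 0 1 \<omega>) \<partial>M) > 1"
    and mu_pos: "(\<integral>\<omega>. X 0 1 \<omega> \<partial>M) > 0"
    \<comment> \<open>(A2)\<close>
    and p0_pos: "measure M {\<omega> \<in> space M. D 0 1 \<omega> = 0} > 0"
    and pk_pos: "\<exists>k\<ge>2. measure M {\<omega> \<in> space M. D 0 1 \<omega> = k} > 0"
    \<comment> \<open>(A3)\<close>
    and A3: "\<And>j. j \<ge> 1 \<Longrightarrow> \<exists>n. measure M {\<omega> \<in> space M. sfS D X R n \<omega> = j} > 0"
    \<comment> \<open>bounded claims, r <= m mu\<close>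
    and X_bdd: "\<exists>B. \<forall>n k. \<forall>\<omega>\<in>space M. X n k \<omega> \<le> B"
    and r_le: "(\<integral>\<omega>. R 0 1 \<omega> \<partial>M) \<le> (\<integral>\<omega>. real (D 0 1 \<omega>) \<partial>M) * (\<integral>\<omega>. X 0 1 \<omega> \<partial>M)"
    \<comment> \<open>theta solves int_theta^b x dF(x) = r/m\<close>
    and theta: "(LINT x : {\<theta>..Sup (cdf_support (cdf (distr M borel (X 0 1)))) } | distr M borel (X 0 1). x)
        = (\<integral>\<omega>. R 0 1 \<omega> \<partial>M) / (\<integral>\<omega>. real (D 0 1 \<omega>) \<partial>M)"
    and stoch_mono: "\<exists>t0. \<forall>t\<ge>t0. \<forall>v::real. v \<ge> 0 \<longrightarrow>
        measure M {\<omega> \<in> space M. real (sfM (Dsum D 0 t \<omega>) (\<lambda>k. X 0 k \<omega>) (Rsum R 0 t \<omega>)) \<ge> v}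
        \<le> measure M {\<omega> \<in> space M.
              real (sfM (Dsum D 0 (t+1) \<omega>) (\<lambda>k. X 0 k \<omega>) (Rsum R 0 (t+1) \<omega>)) \<ge> v}"
    and supercrit: "(\<integral>\<omega>. real (D 0 1 \<omega>) \<partial>M) * (1 - cdf (distr M borel (X 0 1)) \<theta>) > 1"
  shows "measure M {\<omega> \<in> space M. (\<lambda>n. real (sfS D X R n \<omega>)) \<longlonglongrightarrow> 0} < 1"
  proof -
  interpret sfsetting M D X R \<theta>
  proof (intro sfsetting.intro sfsetting_axioms.intro)
    show "prob_space M" by (rule P)
  qed (fact D_meas X_meas R_meas indep D_id X_id R_id X_nonneg F_cont D_var X_var R_var m_gt1 X_bdd theta supercrit)+
  show ?thesis by (rule survival[OF A3])
qed


end
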